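(* Let $A,B$ be real symmetric $4\times 4$ matrices defining quadrics $\mathcal A: X^TAX=0$, $\mathcal B: X^TBX=0$ in $\mathbb{PR}^3$ with $f(\lambda)=\det(\lambda A-B)$ not identically zero. If $f(\lambda)=0$ has a quadruple root with Segre characteristic $[(211)]$, then the only possible index sequences (up to equivalence) are $\langle 2\,{\wr\wr}_{-}||\,2\rangle$ and $\langle 1\,{\wr\wr}_{-}||\,3\rangle$. Furthermore: (1) when the index sequence is $\langle 2\,{\wr\wr}_{-}||\,2\rangle$, the QSIC consists of a pair of intersecting real lines, counted twice; (2) when the index sequence is $\langle 1\,{\wr\wr}_{-}||\,3\rangle$, the QSIC consists of a pair of complex conjugate lines, counted twice.
   Context: $X=(x,y,z,w)^T$ homogeneous coordinates; QSIC $=\mathcal A\cap\mathcal B$. One may take $A$ nonsingular. Canonical form: for $A$ nonsingular there is a real invertible $Q$ with $Q^TAQ=\mathrm{diag}(\varepsilon_1E_1,\dots)$, $Q^TBQ=\mathrm{diag}(\varepsilon_1E_1J_1,\dots)$, $J_i$ the real Jordan blocks of $A^{-1}B$, $E_i$ anti-identity matrices of matching sizes, and $\varepsilon_i\in\{\pm1\}$ uniquely determined for blocks of real eigenvalues (the sign of $J_i$). Segre characteristic $[(211)]$: a single eigenvalue with one $2\times2$ and two $1\times1$ Jordan blocks. $\mathrm{Id}(\lambda)$ = number of positive eigenvalues of $\lambda A-B$. Index sequence $\langle s_0\sigma_1s_1\rangle$: $s_0,s_1$ the values of $\mathrm{Id}$ before and after the root; $\sigma_1$ = two copies of $\wr$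 with subscript the sign of the $2\times2$ block, followed by $||$ for the two $1\times1$ blocks. Equivalence: induced by change of basis of the pencil (including $(A,B)\mapsto(-A,-B)$: $s\mapsto 4-s$, signs reversed). "Counted twice" means a component of multiplicity two of the intersection. *)

theory Defs
  imports "Jordan_Normal_Form.Jordan_Normal_Form" "Jordan_Normal_Form.Char_Poly"
begin

definition sym4 :: "real mat \<Rightarrow> bool" where
  "sym4 A \<longleftrightarrow> A \<in> carrier_mat 4 4 \<and> transpose_mat A = A"

definition pencil_poly :: "real mat \<Rightarrow> real mat \<Rightarrow> real poly" where
  "pencil_poly A B = det (map_mat (\<lambda>a. [:0, a:]) A - map_mat (\<lambda>b. [:b:]) B)"

text \<open>Segre characteristic [(211)] at the root lam0: the Jordan blocks of A^-1 B belonging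
  to the eigenvalue lam0 have sizes 2,1,1 (and since the root is quadruple these are all blocks).\<close>
definition segre_211 :: "real mat \<Rightarrow> real mat \<Rightarrow> real \<Rightarrow> bool" where
  "segre_211 A B lam0 \<longleftrightarrow>
     invertible_mat A \<and>
     (\<exists>M n_as. M \<in> carrier_mat 4 4 \<and> A * M = B \<and> jordan_nf M n_as \<and>
        mset (map fst (filter (\<lambda>p. snd p = lam0) n_as)) = {#2, 1, 1#})"

definition num_pos_eig :: "real mat \<Rightarrow> nat" where
  "num_pos_eig M = (\<Sum>x\<in>{x. 0 < x \<and> poly (char_poly M) x = 0}. order x (char_poly M))"

definition Id :: "real mat \<Rightarrow> real mat \<Rightarrow> real \<Rightarrow> nat" where
  "Id A B lam = num_pos_eig (lam \<cdot>\<^sub>m A - B)"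

text \<open>Canonical form for Segre [(211)] with single eigenvalue lam0:
  Q^T A Q = diag(eps E_2, e2, e3), Q^T B Q = diag(eps E_2 J_2(lam0), e2 lam0, e3 lam0);
  eps is the sign of the 2x2 block.\<close>
definition canon_sign_211 :: "real mat \<Rightarrow> real mat \<Rightarrow> real \<Rightarrow> real \<Rightarrow> bool" where
  "canon_sign_211 A B lam0 eps \<longleftrightarrow> eps \<in> {-1, 1} \<and>
     (\<exists>Q e2 e3. Q \<in> carrier_mat 4 4 \<and> invertible_mat Q \<and> e2 \<in> {-1, 1} \<and> e3 \<in> {-1, 1} \<and>
        transpose_mat Q * A * Q =
          mat_of_rows_list 4 [[0, eps, 0, 0], [eps, 0, 0, 0], [0, 0, e2, 0], [0, 0, 0, e3]] \<and>
        transpose_mat Q * B * Q =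
          mat_of_rows_list 4 [[0, eps * lam0, 0, 0], [eps * lam0, eps, 0, 0],
                              [0, 0, e2 * lam0, 0], [0, 0, 0, e3 * lam0]])"

text \<open>The pencil (A,B) has the index sequence < s0 wr wr_eps || s1 >.\<close>
definition index_seq_211 :: "real mat \<Rightarrow> real mat \<Rightarrow> nat \<Rightarrow> real \<Rightarrow> nat \<Rightarrow> bool" where
  "index_seq_211 A B s0 eps s1 \<longleftrightarrow> sym4 A \<and> sym4 B \<and> pencil_poly A B \<noteq> 0 \<and>
     (\<exists>lam0. order lam0 (pencil_poly A B) = 4 \<and> segre_211 A B lam0 \<and>
        canon_sign_211 A B lam0 eps \<and>
        (\<forall>lam < lam0. Id A B lam = s0) \<and> (\<forall>lam > lam0. Id A B lam = s1))"

text \<open>Equivalence of pencils: change of basis of the pencil and projective change of coordinates.\<close>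
definition pencil_equiv :: "real mat \<Rightarrow> real mat \<Rightarrow> real mat \<Rightarrow> real mat \<Rightarrow> bool" where
  "pencil_equiv A B A' B' \<longleftrightarrow>
     (\<exists>P a b c d. P \<in> carrier_mat 4 4 \<and> invertible_mat P \<and> a * d - b * c \<noteq> 0 \<and>
        A' = transpose_mat P * (a \<cdot>\<^sub>m A + b \<cdot>\<^sub>m B) * P \<and>
        B' = transpose_mat P * (c \<cdot>\<^sub>m A + d \<cdot>\<^sub>m B) * P)"

definition index_seq_equiv_211 :: "real mat \<Rightarrow> real mat \<Rightarrow> nat \<Rightarrow> real \<Rightarrow> nat \<Rightarrow> bool" where
  "index_seq_equiv_211 A B s0 eps s1 \<longleftrightarrow>
     (\<exists>A' B'. pencil_equiv A B A' B' \<and> index_seq_211 A' B' s0 eps s1)"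

definition cmat :: "real mat \<Rightarrow> complex mat" where
  "cmat A = map_mat complex_of_real A"

definition quad_form :: "real mat \<Rightarrow> complex vec \<Rightarrow> complex" where
  "quad_form A X = X \<bullet> (cmat A *\<^sub>v X)"

text \<open>Points of the QSIC (homogeneous coordinates, nonzero vectors of C^4).\<close>
definition qsic :: "real mat \<Rightarrow> real mat \<Rightarrow> complex vec set" where
  "qsic A B = {X. X \<in> carrier_vec 4 \<and> X \<noteq> 0\<^sub>v 4 \<and> quad_form A X = 0 \<and> quad_form B X = 0}"

text \<open>A projective line, represented by its 2-dimensional linear subspace of C^4.\<close>
definition is_line :: "complex vec set \<Rightarrow> bool" where
  "is_line L \<longleftrightarrow> (\<exists>p q. p \<in> carrier_vec 4 \<and> q \<in> carrier_vec 4 \<and>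
      (\<forall>a b. a \<cdot>\<^sub>v p + b \<cdot>\<^sub>v q = 0\<^sub>v 4 \<longrightarrow> a = 0 \<and> b = 0) \<and>
      L = {a \<cdot>\<^sub>v p + b \<cdot>\<^sub>v q | a b. True})"

definition conj_set :: "complex vec set \<Rightarrow> complex vec set" where
  "conj_set L = map_vec cnj ` L"

definition real_line :: "complex vec set \<Rightarrow> bool" where
  "real_line L \<longleftrightarrow> is_line L \<and> conj_set L = L"

text \<open>The two quadrics are tangent along L (gradients A X and B X linearly dependent at every
  point of L); for a line contained in both quadrics this means that L is a component of
  multiplicity at least two of the intersection.\<close>
definition tangent_along :: "real mat \<Rightarrow> real mat \<Rightarrow> complex vec set \<Rightarrow> bool" where
  "tangent_along A B L \<longleftrightarrow> (\<forall>X\<in>L. \<exists>a b. (a, b) \<noteq> (0, 0) \<and>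
      a \<cdot>\<^sub>v (cmat A *\<^sub>v X) + b \<cdot>\<^sub>v (cmat B *\<^sub>v X) = 0\<^sub>v 4)"

definition qsic_two_double_lines ::
    "real mat \<Rightarrow> real mat \<Rightarrow> complex vec set \<Rightarrow> complex vec set \<Rightarrow> bool" where
  "qsic_two_double_lines A B L1 L2 \<longleftrightarrow> is_line L1 \<and> is_line L2 \<and> L1 \<noteq> L2 \<and>
     qsic A B = (L1 \<union> L2) - {0\<^sub>v 4} \<and> tangent_along A B L1 \<and> tangent_along A B L2"

definition qsic_real_intersecting_lines_double :: "real mat \<Rightarrow> real mat \<Rightarrow> bool" where
  "qsic_real_intersecting_lines_double A B \<longleftrightarrow>
     (\<exists>L1 L2. qsic_two_double_lines A B L1 L2 \<and> real_line L1 \<and> real_line L2 \<and>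
        (\<exists>X. X \<in> L1 \<inter> L2 \<and> X \<noteq> 0\<^sub>v 4))"

definition qsic_conj_lines_double :: "real mat \<Rightarrow> real mat \<Rightarrow> bool" where
  "qsic_conj_lines_double A B \<longleftrightarrow>
     (\<exists>L1. qsic_two_double_lines A B L1 (conj_set L1))"

end

theory Submission
  imports Defs
begin


lemma det_mat1: "det (mat (Suc 0) (Suc 0) f) = (f (0,0) :: 'a :: comm_ring_1)"
proof -
  have "det (mat (Suc 0) (Suc 0) f) = (\<Sum>j<Suc 0. (mat (Suc 0) (Suc 0) f) $$ (0,j) * cofactor (mat (Suc 0) (Suc 0) f) 0 j)"
    by (rule laplace_expansion_row, auto)
  also have "\<dots> = f (0,0)" by (simp add: cofactor_def mat_delete_def)
  finally show ?thesis .
qed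

lemma det_mat2: "det (mat 2 2 f) = (f (0,0) * f(1,1) - f(0,1) * f(1,0) :: 'a :: comm_ring_1)"
proof -
  have "det (mat 2 2 f) = (\<Sum>j<2. (mat 2 2 f) $$ (0,j) * cofactor (mat 2 2 f) 0 j)"
    by (rule laplace_expansion_row, auto)
  also have "\<dots> = f (0,0) * f(1,1) - f(0,1) * f(1,0)"
    by (simp add: cofactor_def mat_delete_def numeral_2_eq_2 lessThan_Suc insert_index_def det_mat1)
  finally show ?thesis .
qed

lemmas det_mat2' = det_mat2[unfolded numeral_2_eq_2]
lemma mat_delete_mat: "mat_delete (mat (Suc n) (Suc n) f) i j = mat n n (\<lambda>(a,b). f (insert_index i a, insert_index j b))"
  unfolding mat_delete_def by (rule eq_matI, auto)

lemma det_mat3: "det (mat 3 3 f) = (f (0,0) * (f(1,1) * f(2,2) - f(1,2)*f(2,1))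
   - f(0,1) * (f(1,0) * f(2,2) - f(1,2)*f(2,0)) + f(0,2) * (f(1,0)*f(2,1) - f(1,1)*f(2,0)) :: 'a :: comm_ring_1)"
proof -
  have "det (mat 3 3 f) = (\<Sum>j<3. (mat 3 3 f) $$ (0,j) * cofactor (mat 3 3 f) 0 j)"
    by (rule laplace_expansion_row, auto)
  also have "\<dots> = (f (0,0) * (f(1,1) * f(2,2) - f(1,2)*f(2,1))
   - f(0,1) * (f(1,0) * f(2,2) - f(1,2)*f(2,0)) + f(0,2) * (f(1,0)*f(2,1) - f(1,1)*f(2,0)))"
    unfolding cofactor_def numeral_3_eq_3 mat_delete_mat
    by (simp add: lessThan_Suc insert_index_def det_mat2' numeral_2_eq_2 algebra_simps)
  finally show ?thesis .
qed
lemma numeral_4_eq_4: "(4::nat) = Suc (Suc (Suc (Suc 0)))" by simp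
lemmas det_mat3' = det_mat3[unfolded numeral_3_eq_3 numeral_2_eq_2]
lemma det_mat4: "det (mat 4 4 f) = ( f(0,0) * (f(1,1) * (f(2,2) * f(3,3) - f(2,3) * f(3,2)) - f(1,2) * (f(2,1) * f(3,3) - f(2,3) * f(3,1)) + f(1,3) * (f(2,1) * f(3,2) - f(2,2) * f(3,1))) - f(0,1) * (f(1,0) * (f(2,2) * f(3,3) - f(2,3) * f(3,2)) - f(1,2) * (f(2,0) * f(3,3) - f(2,3) * f(3,0)) + f(1,3) * (f(2,0) * f(3,2) - f(2,2) * f(3,0))) + f(0,2) * (f(1,0) * (f(2,1) * f(3,3) - f(2,3) * f(3,1)) - f(1,1) * (f(2,0) * f(3,3) - f(2,3) * f(3,0)) + f(1,3) * (f(2,0) * f(3,1) - f(2,1) * f(3,0))) - f(0,3) * (f(1,0) * (f(2,1) * f(3,2) - f(2,2) * f(3,1)) - f(1,1) * (f(2,0) * f(3,2) - f(2,2) * f(3,0)) + f(1,2) * (f(2,0) * f(3,1) - f(2,1) * f(3,0))) :: 'a :: comm_ring_1)"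
proof -
  have "det (mat 4 4 f) = (\<Sum>j<4. (mat 4 4 f) $$ (0,j) * cofactor (mat 4 4 f) 0 j)"
    by (rule laplace_expansion_row, auto)
  also have "\<dots> = ( f(0,0) * (f(1,1) * (f(2,2) * f(3,3) - f(2,3) * f(3,2)) - f(1,2) * (f(2,1) * f(3,3) - f(2,3) * f(3,1)) + f(1,3) * (f(2,1) * f(3,2) - f(2,2) * f(3,1))) - f(0,1) * (f(1,0) * (f(2,2) * f(3,3) - f(2,3) * f(3,2)) - f(1,2) * (f(2,0) * f(3,3) - f(2,3) * f(3,0)) + f(1,3) * (f(2,0) * f(3,2) - f(2,2) * f(3,0))) + f(0,2) * (f(1,0) * (f(2,1) * f(3,3) - f(2,3) * f(3,1)) - f(1,1) * (f(2,0) * f(3,3) - f(2,3) * f(3,0)) + f(1,3) * (f(2,0) * f(3,1) - f(2,1) * f(3,0))) - f(0,3) * (f(1,0) * (f(2,1) * f(3,2) - f(2,2) * f(3,1)) - f(1,1) * (f(2,0) * f(3,2) - f(2,2) * f(3,0)) + f(1,2) * (f(2,0) * f(3,1) - f(2,1) * f(3,0))))"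
    unfolding cofactor_def numeral_4_eq_4 mat_delete_mat
    by (simp add: lessThan_Suc insert_index_def det_mat3' numeral_3_eq_3 numeral_2_eq_2 algebra_simps)
  finally show ?thesis .
qed

lemma det4: assumes "A \<in> carrier_mat 4 4" shows "det A = ( A$$(0,0) * (A$$(1,1) * (A$$(2,2) * A$$(3,3) - A$$(2,3) * A$$(3,2)) - A$$(1,2) * (A$$(2,1) * A$$(3,3) - A$$(2,3) * A$$(3,1)) + A$$(1,3) * (A$$(2,1) * A$$(3,2) - A$$(2,2) * A$$(3,1))) - A$$(0,1) * (A$$(1,0) * (A$$(2,2) * A$$(3,3) - A$$(2,3) * A$$(3,2)) - A$$(1,2) * (A$$(2,0) * A$$(3,3) - A$$(2,3) * A$$(3,0)) + A$$(1,3) * (A$$(2,0) * A$$(3,2) - A$$(2,2) * A$$(3,0))) + A$$(0,2) * (A$$(1,0) * (A$$(2,1) * A$$(3,3) - A$$(2,3) * A$$(3,1)) - A$$(1,1) * (A$$(2,0) * A$$(3,3) - A$$(2,3) * A$$(3,0)) + A$$(1,3) * (A$$(2,0) * A$$(3,1) - A$$(2,1) * A$$(3,0))) - A$$(0,3) * (A$$(1,0) * (A$$(2,1) * A$$(3,2) - A$$(2,2) * A$$(3,1)) - A$$(1,1) * (A$$(2,0) * A$$(3,2) - A$$(2,2) * A$$(3,0)) + A$$(1,2) * (A$$(2,0) * A$$(3,1) - A$$(2,1) * A$$(3,0))) :: 'a :: comm_ring_1)"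
proof -
  have "A = mat 4 4 (\<lambda>(i,j). A $$ (i,j))" using assms by (intro eq_matI, auto)
  hence "det A = det (mat 4 4 (\<lambda>(i,j). A $$ (i,j)))" by simp
  also have "\<dots> = ( A$$(0,0) * (A$$(1,1) * (A$$(2,2) * A$$(3,3) - A$$(2,3) * A$$(3,2)) - A$$(1,2) * (A$$(2,1) * A$$(3,3) - A$$(2,3) * A$$(3,1)) + A$$(1,3) * (A$$(2,1) * A$$(3,2) - A$$(2,2) * A$$(3,1))) - A$$(0,1) * (A$$(1,0) * (A$$(2,2) * A$$(3,3) - A$$(2,3) * A$$(3,2)) - A$$(1,2) * (A$$(2,0) * A$$(3,3) - A$$(2,3) * A$$(3,0)) + A$$(1,3) * (A$$(2,0) * A$$(3,2) - A$$(2,2) * A$$(3,0))) + A$$(0,2) * (A$$(1,0) * (A$$(2,1) * A$$(3,3) - A$$(2,3) * A$$(3,1)) - A$$(1,1) * (A$$(2,0) * A$$(3,3) - A$$(2,3) * A$$(3,0)) + A$$(1,3) * (A$$(2,0) * A$$(3,1) - A$$(2,1) * A$$(3,0))) - A$$(0,3) * (A$$(1,0) * (A$$(2,1) * A$$(3,2) - A$$(2,2) * A$$(3,1)) - A$$(1,1) * (A$$(2,0) * A$$(3,2) - A$$(2,2) * A$$(3,0)) + A$$(1,2) * (A$$(2,0) * A$$(3,1) - A$$(2,1) * A$$(3,0))))" unfolding det_mat4 by simp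
  finally show ?thesis .
qed

definition cA :: "real \<Rightarrow> real mat" where
  "cA e = mat_of_rows_list 4 [[0,-1,0,0],[-1,0,0,0],[0,0,1,0],[0,0,0,e]]"
definition cB :: "real mat" where
  "cB = mat_of_rows_list 4 [[0,0,0,0],[0,-1,0,0],[0,0,0,0],[0,0,0,0]]"

lemma cA_carrier[simp]: "cA e \<in> carrier_mat 4 4" unfolding cA_def carrier_mat_def by (simp add: mat_of_rows_list_def)
lemma cB_carrier[simp]: "cB \<in> carrier_mat 4 4" unfolding cB_def carrier_mat_def by (simp add: mat_of_rows_list_def)
lemma cdims[simp]: "dim_row (cA e) = 4" "dim_col (cA e) = 4" "dim_row cB = 4" "dim_col cB = 4"
  by (simp_all add: cA_def cB_def mat_of_rows_list_def)
lemma cA_ent: "cA e $$ (0,0) = 0" "cA e $$ (0,1) = -1" "cA e $$ (0,2) = 0" "cA e $$ (0,3) = 0"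
  "cA e $$ (1,0) = -1" "cA e $$ (1,1) = 0" "cA e $$ (1,2) = 0" "cA e $$ (1,3) = 0"
  "cA e $$ (2,0) = 0" "cA e $$ (2,1) = 0" "cA e $$ (2,2) = 1" "cA e $$ (2,3) = 0"
  "cA e $$ (3,0) = 0" "cA e $$ (3,1) = 0" "cA e $$ (3,2) = 0" "cA e $$ (3,3) = e"
  by (simp_all add: cA_def mat_of_rows_list_def)
lemma cB_ent: "cB $$ (0,0) = 0" "cB $$ (0,1) = 0" "cB $$ (0,2) = 0" "cB $$ (0,3) = 0"
  "cB $$ (1,0) = 0" "cB $$ (1,1) = -1" "cB $$ (1,2) = 0" "cB $$ (1,3) = 0"
  "cB $$ (2,0) = 0" "cB $$ (2,1) = 0" "cB $$ (2,2) = 0" "cB $$ (2,3) = 0"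
  "cB $$ (3,0) = 0" "cB $$ (3,1) = 0" "cB $$ (3,2) = 0" "cB $$ (3,3) = 0"
  by (simp_all add: cB_def mat_of_rows_list_def)

lemma pp_c: "pencil_poly (cA e) cB = [:0,0,0,0,-e:]"
proof -
  let ?M = "map_mat (\<lambda>a. [:0, a:]) (cA e) - map_mat (\<lambda>b. [:b:]) cB"
  have M: "?M \<in> carrier_mat 4 4" by (simp add: minus_carrier_mat)
  have ent: "\<And>i j. i < 4 \<Longrightarrow> j < 4 \<Longrightarrow> ?M $$ (i,j) = [:0, cA e $$ (i,j):] - [:cB $$ (i,j):]" by simp
  show ?thesis unfolding pencil_poly_def
    apply (subst det4[OF M])
    apply (simp only: ent zero_less_numeral one_less_numeral_iff numeral_less_iff semiring_norm cA_ent cB_ent)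
    apply (simp add: algebra_simps cA_ent cB_ent cA_ent[unfolded One_nat_def] cB_ent[unfolded One_nat_def])
    done
qed

lemma less4: "(i::nat) < 4 \<longleftrightarrow> i = 0 \<or> i = 1 \<or> i = 2 \<or> i = 3" by auto

lemma sum4: "(\<Sum>k<(4::nat). f k) = f 0 + f 1 + f 2 + (f 3 :: 'a :: comm_monoid_add)"
  by (simp add: numeral_4_eq_4 lessThan_Suc numeral_3_eq_3 numeral_2_eq_2 ac_simps)

lemma sprod4: assumes "v \<in> carrier_vec 4" "w \<in> carrier_vec 4"
  shows "v \<bullet> w = v$0 * w$0 + v$1 * w$1 + v$2 * w$2 + v$3 * (w$3 :: 'a :: comm_semiring_0)"
proof -
  have "v \<bullet> w = (\<Sum>k<4. v$k * w$k)" using assms unfolding scalar_prod_def by (simp add: atLeast0LessThan)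
  thus ?thesis unfolding sum4 .
qed

lemma mult4: assumes "A \<in> carrier_mat 4 4" "B \<in> carrier_mat 4 4" "i < 4" "j < 4"
  shows "(A * B) $$ (i,j) = A$$(i,0) * B$$(0,j) + A$$(i,1) * B$$(1,j) + A$$(i,2) * B$$(2,j) + A$$(i,3) * (B$$(3,j) :: 'a :: comm_semiring_0)"
  using assms by (simp add: sprod4)

lemma mulv4: assumes "A \<in> carrier_mat 4 4" "v \<in> carrier_vec 4" "i < 4"
  shows "(A *\<^sub>v v) $ i = A$$(i,0) * v$0 + A$$(i,1) * v$1 + A$$(i,2) * v$2 + A$$(i,3) * (v$3 :: 'a :: comm_semiring_0)"
  using assms by (simp add: sprod4)


definition npos :: "real poly \<Rightarrow> nat" where
  "npos p = (\<Sum>x\<in>{x. 0 < x \<and> poly p x = 0}. order x p)"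

lemma npos_mult: assumes p: "p \<noteq> 0" and q: "q \<noteq> 0"
  shows "npos (p * q) = npos p + npos q"
proof -
  let ?S = "\<lambda>p. {x::real. 0 < x \<and> poly p x = 0}"
  have fin: "finite (?S p)" "finite (?S q)" using poly_roots_finite[OF p] poly_roots_finite[OF q]
    by (auto elim: finite_subset[rotated])
  have U: "?S (p*q) = ?S p \<union> ?S q" by auto
  have pq: "p * q \<noteq> 0" using p q by auto
  have "npos (p*q) = (\<Sum>x\<in>?S p \<union> ?S q. order x p + order x q)"
    unfolding npos_def U using order_mult[OF pq] by simp
  also have "\<dots> = (\<Sum>x\<in>?S p \<union> ?S q. order x p) + (\<Sum>x\<in>?S p \<union> ?S q. order x q)"
    by (simp add: sum.distrib)
  also have "(\<Sum>x\<in>?S p \<union> ?S q. order x p) = (\<Sum>x\<in>?S p. order x p)"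
    by (rule sum.mono_neutral_right, insert fin, auto simp: order_root)
  also have "(\<Sum>x\<in>?S p \<union> ?S q. order x q) = (\<Sum>x\<in>?S q. order x q)"
    by (rule sum.mono_neutral_right, insert fin, auto simp: order_root)
  finally show ?thesis unfolding npos_def by simp
qed

lemma npos_lin: "npos [:-r, 1:] = (if r > 0 then 1 else 0)"
proof -
  have S: "{x. 0 < x \<and> poly [:-r, 1:] x = 0} = (if r > 0 then {r} else {})" by auto
  have "order r [:-r, 1:] = 1" using order_power_n_n[of r 1] by simp
  thus ?thesis unfolding npos_def S by auto
qed


lemma npos_parity: fixes p :: "real poly"
  assumes "p \<noteq> 0" "poly p 0 \<noteq> 0" "lead_coeff p > 0"
  shows "even (npos p) \<longleftrightarrow> poly p 0 > 0"
  using assms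
proof (induction "degree p" arbitrary: p rule: less_induct)
  case less
  show ?case
  proof (cases "\<exists>r>0. poly p r = 0")
    case True
    then obtain r where r: "r > 0" "poly p r = 0" by auto
    then obtain q where pq: "p = [:-r,1:] * q" using poly_eq_0_iff_dvd by (metis dvdE)
    have q0: "q \<noteq> 0" using less.prems pq by auto
    have "degree p = degree [:-r,1:] + degree q" unfolding pq by (rule degree_mult_eq, auto simp: q0)
    hence dq: "degree q < degree p" by simp
    have lq: "lead_coeff q = lead_coeff p" unfolding pq lead_coeff_mult by simp
    have pq0: "poly p 0 = - r * poly q 0" using pq by simp
    have qz: "poly q 0 \<noteq> 0" using pq0 less.prems by auto
    have IH: "even (npos q) \<longleftrightarrow> poly q 0 > 0"
      by (rule less.hyps[OF dq q0 qz], use lq less.prems in auto)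
    have np: "npos p = 1 + npos q" unfolding pq using npos_mult[OF _ q0, of "[:-r,1:]"] npos_lin[of r] r by simp
    show ?thesis unfolding np pq0 using IH r qz
      by (auto simp: mult_less_0_iff zero_less_mult_iff)
  next
    case False
    hence np: "npos p = 0" unfolding npos_def by (auto intro: sum.neutral)
    have "poly p 0 > 0"
    proof (rule ccontr)
      assume "\<not> poly p 0 > 0"
      hence neg: "poly p 0 < 0" using less.prems by auto
      show False
      proof (cases "degree p = 0")
        case True
        then obtain c where "p = [:c:]" by (metis degree_eq_zeroE)
        thus False using neg less.prems by auto
      next
        case False
        obtain n where n: "\<forall>x\<ge>n. poly p x \<ge> lead_coeff p" using poly_pinfty_gt_lc[OF less.prems(3)] by auto
        let ?b = "max n 1"
        have "poly p ?b \<ge> lead_coeff p" using n by simp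
        hence "poly p ?b > 0" using less.prems(3) by linarith
        have "(0::real) < ?b" by simp
        from poly_IVT_pos[OF this neg \<open>poly p ?b > 0\<close>] obtain x where "0 < x" "poly p x = 0" by auto
        thus False using \<open>\<not> (\<exists>r>0. poly p r = 0)\<close> by auto
      qed
    qed
    thus ?thesis using np by simp
  qed
qed


definition Jm :: "nat \<Rightarrow> 'a :: {zero,one} \<Rightarrow> 'a mat" where
  "Jm k l = mat 4 4 (\<lambda>(i,j). if i = j then l else if i = k \<and> j = Suc k then 1 else 0)"

lemma Jm_carrier[simp]: "Jm k l \<in> carrier_mat 4 4" unfolding Jm_def by simp
lemma Jm_dims[simp]: "dim_row (Jm k l) = 4" "dim_col (Jm k l) = 4" unfolding Jm_def by simp_all
lemma Jm_idx: "i < 4 \<Longrightarrow> j < 4 \<Longrightarrow> Jm k l $$ (i,j) = (if i = j then l else if i = k \<and> j = Suc k then 1 else 0)"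
  unfolding Jm_def by simp

lemmas cA_ent' = cA_ent cA_ent[unfolded One_nat_def]
lemmas cB_ent' = cB_ent cB_ent[unfolded One_nat_def]
lemma jm0: "jordan_matrix [(2,l),(1,l),(1,l)] = Jm 0 l"
  by (rule eq_matI) (auto simp: jordan_matrix_Cons less4 jordan_matrix_def Jm_idx)
lemma jm1: "jordan_matrix [(1,l),(2,l),(1,l)] = Jm 1 l"
  by (rule eq_matI) (auto simp: jordan_matrix_Cons less4 jordan_matrix_def Jm_idx)
lemma jm2: "jordan_matrix [(1,l),(1,l),(2,l)] = Jm 2 l"
  by (rule eq_matI) (auto simp: jordan_matrix_Cons less4 jordan_matrix_def Jm_idx)

lemma cA_sym: "sym4 (cA e)"
  unfolding sym4_def by (auto intro!: eq_matI simp: less4 cA_ent')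
lemma cB_sym: "sym4 cB"
  unfolding sym4_def by (auto intro!: eq_matI simp: less4 cB_ent')

lemma cA_J: "cA e * Jm 0 0 = cB"
  by (rule eq_matI) (auto simp: mult4 less4 cA_ent' cB_ent' Jm_idx simp del: index_mult_mat(1))

lemma det_cA: "det (cA e) = - e"
  by (subst det4, simp) (simp add: cA_ent')


lemma det_inv: fixes A :: "'a::field mat" assumes A: "A \<in> carrier_mat n n" and d: "det A \<noteq> 0"
  shows "\<exists>B \<in> carrier_mat n n. A * B = 1\<^sub>m n \<and> B * A = 1\<^sub>m n"
  using det_non_zero_imp_unit[OF A d, of "()"] unfolding Units_def ring_mat_def by auto

lemma det_invertible: fixes A :: "'a::field mat" assumes A: "A \<in> carrier_mat n n" and d: "det A \<noteq> 0"
  shows "invertible_mat A"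
  using det_inv[OF A d] A unfolding invertible_mat_def inverts_mat_def square_mat.simps by auto

lemma invertible_inv: fixes A :: "'a::field mat" assumes A: "A \<in> carrier_mat n n" and i: "invertible_mat A"
  shows "\<exists>B \<in> carrier_mat n n. A * B = 1\<^sub>m n \<and> B * A = 1\<^sub>m n"
proof -
  from i obtain B where AB: "A * B = 1\<^sub>m (dim_row A)" and BA: "B * A = 1\<^sub>m (dim_row B)"
    unfolding invertible_mat_def inverts_mat_def by auto
  have "dim_col B = n" using arg_cong[OF AB, of dim_col] A by auto
  moreover have "dim_row B = n" using arg_cong[OF BA, of dim_col] A by auto
  ultimately show ?thesis using AB BA A by (intro bexI[of _ B], auto)
qed

lemma invertible_det: fixes A :: "'a::field mat" assumes A: "A \<in> carrier_mat n n" and i: "invertible_mat A"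
  shows "det A \<noteq> 0"
proof -
  from invertible_inv[OF A i] obtain B where B: "B \<in> carrier_mat n n" "A * B = 1\<^sub>m n" by auto
  from arg_cong[OF B(2), of det] det_mult[OF A B(1)] show ?thesis by auto
qed

lemma order_pp_c: assumes "e \<noteq> 0" shows "order 0 (pencil_poly (cA e) cB) = 4"
proof -
  have "pencil_poly (cA e) cB = Polynomial.smult (-e) ([:-0,1:]^4)" unfolding pp_c
    by (simp add: numeral_4_eq_4)
  thus ?thesis using assms order_power_n_n[of "0::real" 4] by (simp add: order_smult)
qed

lemma pp_c_nz: "e \<noteq> 0 \<Longrightarrow> pencil_poly (cA e) cB \<noteq> 0" unfolding pp_c by simp

lemma segre_c: assumes "e \<noteq> 0" shows "segre_211 (cA e) cB 0"
  unfolding segre_211_def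
proof (intro conjI exI)
  show "invertible_mat (cA e)" by (rule det_invertible[OF cA_carrier], simp add: det_cA assms)
  show "Jm 0 0 \<in> carrier_mat 4 4" by simp
  show "cA e * Jm 0 0 = cB" by (rule cA_J)
  show "jordan_nf (Jm 0 (0::real)) [(2,0),(1,0),(1,0)]" unfolding jordan_nf_def
    using similar_mat_refl[OF Jm_carrier[of 0 "0::real"]] jm0[of "0::real"] by auto
  show "mset (map fst (filter (\<lambda>p. snd p = 0) [(2::nat,0::real),(1,0),(1,0)])) = {#2, 1, 1#}" by simp
qed

lemma canon_c: assumes "e \<in> {-1, 1}" shows "canon_sign_211 (cA e) cB 0 (-1)"
  unfolding canon_sign_211_def
proof (intro conjI exI)
  show "(-1::real) \<in> {-1,1}" "(1::real) \<in> {-1,1}" "e \<in> {-1,1}" using assms by auto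
  show "1\<^sub>m 4 \<in> carrier_mat 4 4" by simp
  show "invertible_mat (1\<^sub>m 4 :: real mat)" by (rule det_invertible[of _ 4], auto)
  show "transpose_mat (1\<^sub>m 4) * cA e * 1\<^sub>m 4 =
    mat_of_rows_list 4 [[0, - 1, 0, 0], [- 1, 0, 0, 0], [0, 0, 1, 0], [0, 0, 0, e]]"
    by (simp add: cA_def[symmetric])
  show "transpose_mat (1\<^sub>m 4) * cB * 1\<^sub>m 4 =
    mat_of_rows_list 4 [[0, - 1 * 0, 0, 0], [- 1 * 0, - 1, 0, 0], [0, 0, 1 * 0, 0], [0, 0, 0, e * 0]]"
    by (simp add: cB_def[symmetric])
qed


lemma cp_c: "char_poly (l \<cdot>\<^sub>m cA e - cB) = [:-(l^2), -1, 1:] * [:-l,1:] * [:-(e*l),1:]"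
proof -
  let ?S = "l \<cdot>\<^sub>m cA e - cB"
  let ?M = "char_poly_matrix ?S"
  have S: "?S \<in> carrier_mat 4 4" by (simp add: minus_carrier_mat)
  have M: "?M \<in> carrier_mat 4 4" using S by simp
  have ent: "\<And>i j. i < 4 \<Longrightarrow> j < 4 \<Longrightarrow> ?M $$ (i,j) = (if i = j then [:0,1:] else 0) + [:-(l * cA e $$ (i,j) - cB $$ (i,j)):]"
    by (simp add: char_poly_matrix_def)
  show ?thesis unfolding char_poly_def
    apply (subst det4[OF M])
    apply (simp only: ent zero_less_numeral one_less_numeral_iff numeral_less_iff semiring_norm)
    apply (simp add: cA_ent' cB_ent' algebra_simps power2_eq_square)
    done
qed


lemma npos_quad: assumes l: "l \<noteq> 0" shows "npos [:-(l^2), -1, 1:] = 1"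
proof -
  define s where "s = sqrt (1 + 4 * l^2)"
  have s2: "s^2 = 1 + 4 * l^2" unfolding s_def by (simp add: add_nonneg_nonneg)
  have s1: "s > 1" unfolding s_def using l by (intro real_less_rsqrt, simp)
  define r1 where "r1 = (1 + s) / 2"
  define r2 where "r2 = (1 - s) / 2"
  have fac: "[:-(l^2), -1, 1:] = [:-r1,1:] * [:-r2,1:]"
    unfolding r1_def r2_def using s2 by (simp add: field_simps power2_eq_square)
  have "npos [:-(l^2), -1, 1:] = npos [:-r1,1:] + npos [:-r2,1:]" unfolding fac
    by (rule npos_mult, auto)
  also have "\<dots> = 1" unfolding npos_lin r1_def r2_def using s1 by auto
  finally show ?thesis .
qed

lemma Id_c: assumes l: "l \<noteq> 0" and e: "e \<noteq> 0"
  shows "Id (cA e) cB l = 1 + (if l > 0 then 1 else 0) + (if e * l > 0 then 1 else 0)"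
proof -
  have "Id (cA e) cB l = npos ([:-(l^2), -1, 1:] * [:-l,1:] * [:-(e*l),1:])"
    unfolding Id_def num_pos_eig_def npos_def cp_c ..
  also have "\<dots> = npos [:-(l^2), -1, 1:] + npos [:-l,1:] + npos [:-(e*l),1:]"
    by (subst npos_mult, simp, simp, subst npos_mult, auto)
  finally show ?thesis unfolding npos_quad[OF l] npos_lin by simp
qed

lemma idx_c1: "index_seq_211 (cA 1) cB 1 (-1) 3"
  unfolding index_seq_211_def
proof (intro conjI exI allI impI)
  show "sym4 (cA 1)" "sym4 cB" by (rule cA_sym, rule cB_sym)
  show "pencil_poly (cA 1) cB \<noteq> 0" by (rule pp_c_nz, simp)
  show "order 0 (pencil_poly (cA 1) cB) = 4" by (rule order_pp_c, simp)
  show "segre_211 (cA 1) cB 0" by (rule segre_c, simp)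
  show "canon_sign_211 (cA 1) cB 0 (-1)" by (rule canon_c, simp)
  fix lam :: real
  { assume "lam < 0" thus "Id (cA 1) cB lam = 1" by (subst Id_c, auto) }
  { assume "lam > 0" thus "Id (cA 1) cB lam = 3" by (subst Id_c, auto) }
qed

lemma idx_c2: "index_seq_211 (cA (-1)) cB 2 (-1) 2"
  unfolding index_seq_211_def
proof (intro conjI exI allI impI)
  show "sym4 (cA (-1))" "sym4 cB" by (rule cA_sym, rule cB_sym)
  show "pencil_poly (cA (-1)) cB \<noteq> 0" by (rule pp_c_nz, simp)
  show "order 0 (pencil_poly (cA (-1)) cB) = 4" by (rule order_pp_c, simp)
  show "segre_211 (cA (-1)) cB 0" by (rule segre_c, simp)
  show "canon_sign_211 (cA (-1)) cB 0 (-1)" by (rule canon_c, simp)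
  fix lam :: real
  { assume "lam < 0" thus "Id (cA (-1)) cB lam = 2" by (subst Id_c, auto) }
  { assume "lam > 0" thus "Id (cA (-1)) cB lam = 2" by (subst Id_c, auto) }
qed


lemma sum_list_filter_split: "sum_list (map f xs) = sum_list (map f (filter P xs)) + sum_list (map f (filter (\<lambda>x. \<not> P x) xs)) "
  for f :: "'a \<Rightarrow> nat"
  by (induct xs) auto

lemma mset_211: assumes "mset (xs::nat list) = {#2,1,1#}"
  shows "xs = [2,1,1] \<or> xs = [1,2,1] \<or> xs = [1,1,2]"
proof -
  have l: "length xs = 3" using arg_cong[OF assms, of size] by simp
  have xs: "xs = [xs!0, xs!1, xs!2]" by (rule nth_equalityI, use l in \<open>auto simp: less_Suc_eq numeral_3_eq_3 numeral_2_eq_2\<close>)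
  define a b c where "a = xs!0" "b = xs!1" "c = xs!2"
  have m: "{#a,b,c#} = {#2,1,1#}" using assms xs unfolding a_b_c_def by (metis mset.simps)
  have "set_mset {#a,b,c#} = {1,2}" unfolding m by auto
  hence abc: "a \<in> {1,2}" "b \<in> {1,2}" "c \<in> {1,2}" by auto
  have c2: "count {#a,b,c#} 2 = 1" unfolding m by simp
  have "(a = 2 \<and> b = 1 \<and> c = 1) \<or> (a = 1 \<and> b = 2 \<and> c = 1) \<or> (a = 1 \<and> b = 1 \<and> c = 2)"
    using abc c2 by (auto split: if_splits)
  thus ?thesis using xs unfolding a_b_c_def by auto
qed
lemma jordan_struct: assumes M: "M \<in> carrier_mat 4 4" and jnf: "jordan_nf M n_as"
  and ms: "mset (map fst (filter (\<lambda>p. snd p = l) n_as)) = {#2,1,1#}"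
  shows "\<exists>k<3. similar_mat M (Jm k l)"
proof -
  from jnf have z: "0 \<notin> fst ` set n_as" and sim: "similar_mat M (jordan_matrix n_as)"
    unfolding jordan_nf_def by auto
  from similar_matD[OF sim] M have "jordan_matrix n_as \<in> carrier_mat 4 4" by auto
  hence s4: "sum_list (map fst n_as) = 4" using jordan_matrix_dim[of n_as] carrier_matD(1) by metis
  have "sum_list (map fst (filter (\<lambda>p. snd p = l) n_as)) = sum_mset (mset (map fst (filter (\<lambda>p. snd p = l) n_as)))"
    by (rule sum_mset_sum_list[symmetric])
  also have "\<dots> = 4" unfolding ms by simp
  finally have "sum_list (map fst (filter (\<lambda>x. \<not> snd x = l) n_as)) = 0"
    using s4 sum_list_filter_split[of fst n_as "\<lambda>p. snd p = l"] by simp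
  hence "\<forall>x\<in>set (filter (\<lambda>x. \<not> snd x = l) n_as). fst x = 0" by simp
  hence all: "\<forall>x\<in>set n_as. snd x = l" using z by (force simp: image_iff)
  hence "filter (\<lambda>p. snd p = l) n_as = n_as" by simp
  with ms have ms': "mset (map fst n_as) = {#2,1,1#}" by simp
  have nas: "n_as = map (\<lambda>n. (n, l)) (map fst n_as)" using all by (induct n_as) auto
  have nas': "\<And>ys. map fst n_as = ys \<Longrightarrow> n_as = map (\<lambda>n. (n, l)) ys" using nas by auto
  from mset_211[OF ms'] have "n_as = [(2,l),(1,l),(1,l)] \<or> n_as = [(1,l),(2,l),(1,l)] \<or> n_as = [(1,l),(1,l),(2,l)]"
    using nas'[of "[2,1,1]"] nas'[of "[1,2,1]"] nas'[of "[1,1,2]"] by auto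
  thus ?thesis
  proof (elim disjE)
    assume "n_as = [(2,l),(1,l),(1,l)]"
    hence "similar_mat M (jordan_matrix [(2,l),(1,l),(1,l)])" using sim by simp
    hence "similar_mat M (Jm 0 l)" unfolding jm0 .
    thus ?thesis by (intro exI[of _ 0], simp)
  next
    assume "n_as = [(1,l),(2,l),(1,l)]"
    hence "similar_mat M (jordan_matrix [(1,l),(2,l),(1,l)])" using sim by simp
    hence "similar_mat M (Jm 1 l)" unfolding jm1 .
    thus ?thesis by (intro exI[of _ 1], simp)
  next
    assume "n_as = [(1,l),(1,l),(2,l)]"
    hence "similar_mat M (jordan_matrix [(1,l),(1,l),(2,l)])" using sim by simp
    hence "similar_mat M (Jm 2 l)" unfolding jm2 .
    thus ?thesis by (intro exI[of _ 2], simp)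
  qed
qed


lemma similar_rank1: fixes M :: "real mat" assumes M: "M \<in> carrier_mat 4 4" and sim: "similar_mat M (Jm k l)" and k: "k < 3"
  shows "\<exists>p q. p \<in> carrier_vec 4 \<and> q \<in> carrier_vec 4 \<and> p \<noteq> 0\<^sub>v 4 \<and> q \<noteq> 0\<^sub>v 4 \<and> q \<bullet> p = 0 \<and>
     (\<forall>i<4. \<forall>j<4. M $$ (i,j) = (if i = j then l else 0) + p$i * q$j)"
proof -
  from similar_matD[OF sim] obtain n P Q where c: "{M, Jm k l, P, Q} \<subseteq> carrier_mat n n"
    and PQ: "P * Q = 1\<^sub>m n" and QP: "Q * P = 1\<^sub>m n" and MPQ: "M = P * Jm k l * Q" by blast
  have n: "n = 4" using c M by auto
  have P: "P \<in> carrier_mat 4 4" and Q: "Q \<in> carrier_mat 4 4" using c n by auto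
  have PQe: "P$$(i,0) * Q$$(0,j) + P$$(i,1) * Q$$(1,j) + P$$(i,2) * Q$$(2,j) + P$$(i,3) * Q$$(3,j) = (if i = j then 1 else 0)"
    if "i < 4" "j < 4" for i j
    using arg_cong[OF PQ, of "\<lambda>X. X $$ (i,j)"] mult4[OF P Q that] that n by simp
  have dP: "dim_row P = 4" "dim_col P = 4" "dim_row Q = 4" "dim_col Q = 4" using P Q by auto
  have rc: "\<And>i. row Q i \<in> carrier_vec 4" "\<And>j. col P j \<in> carrier_vec 4" by (auto intro!: carrier_vecI simp: dP)
  have PJ: "P * Jm k l \<in> carrier_mat 4 4" using P by simp
  have ent: "M $$ (i,j) = l * (P$$(i,0) * Q$$(0,j) + P$$(i,1) * Q$$(1,j) + P$$(i,2) * Q$$(2,j) + P$$(i,3) * Q$$(3,j))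
      + P$$(i,k) * Q$$(Suc k, j)" if "i < 4" "j < 4" for i j
  proof -
    have "M $$ (i,j) = (P * Jm k l * Q) $$ (i,j)" using MPQ by simp
    also have "\<dots> = (P * Jm k l)$$(i,0) * Q$$(0,j) + (P * Jm k l)$$(i,1) * Q$$(1,j) + (P * Jm k l)$$(i,2) * Q$$(2,j) + (P * Jm k l)$$(i,3) * Q$$(3,j)"
      by (rule mult4[OF PJ Q that])
    also have "\<dots> = l * (P$$(i,0) * Q$$(0,j) + P$$(i,1) * Q$$(1,j) + P$$(i,2) * Q$$(2,j) + P$$(i,3) * Q$$(3,j))
      + P$$(i,k) * Q$$(Suc k, j)"
    proof -
      have kk: "k = 0 \<or> k = 1 \<or> k = 2" using k by auto
      have s2: "Suc (Suc 0) = (2::nat)" by simp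
      show ?thesis using kk
        by (elim disjE; simp add: mult4[OF P Jm_carrier] that Jm_idx algebra_simps s2)
    qed
    finally show ?thesis .
  qed
  define p where "p = col P k"
  define q where "q = row Q (Suc k)"
  have p: "p \<in> carrier_vec 4" and q: "q \<in> carrier_vec 4" unfolding p_def q_def using P Q by (auto intro!: carrier_vecI)
  have pi: "\<And>i. i < 4 \<Longrightarrow> p$i = P$$(i,k)" unfolding p_def using dP k by simp
  have qj: "\<And>j. j < 4 \<Longrightarrow> q$j = Q$$(Suc k,j)" unfolding q_def using dP k by simp
  have QPe: "\<And>i j. i < 4 \<Longrightarrow> j < 4 \<Longrightarrow> row Q i \<bullet> col P j = (if i = j then 1 else 0)"
    using QP n P Q by (metis index_mult_mat(1) index_one_mat(1) carrier_matD)
  have "q \<bullet> p = 0" unfolding p_def q_def using QPe[of "Suc k" k] k by simp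
  moreover have "p \<noteq> 0\<^sub>v 4"
  proof
    assume "p = 0\<^sub>v 4"
    hence "row Q k \<bullet> col P k = 0" unfolding p_def using rc by simp
    thus False using QPe[of k k] k by simp
  qed
  moreover have "q \<noteq> 0\<^sub>v 4"
  proof
    assume "q = 0\<^sub>v 4"
    hence "row Q (Suc k) \<bullet> col P (Suc k) = 0" unfolding q_def using rc by simp
    thus False using QPe[of "Suc k" "Suc k"] k by simp
  qed
  moreover have "\<forall>i<4. \<forall>j<4. M $$ (i,j) = (if i = j then l else 0) + p$i * q$j"
    using ent PQe pi qj k by simp
  ultimately show ?thesis using p q by blast
qed


lemma sym4_ent: assumes "sym4 A" "i < 4" "j < 4" shows "A $$ (i,j) = A $$ (j,i)"
proof -
  have A: "A \<in> carrier_mat 4 4" "transpose_mat A = A" using assms(1) unfolding sym4_def by auto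
  have "transpose_mat A $$ (j,i) = A $$ (i,j)" using A(1) assms(2,3) by simp
  thus ?thesis using A(2) by simp
qed

lemma sym4_carrier: "sym4 A \<Longrightarrow> A \<in> carrier_mat 4 4" unfolding sym4_def by auto

lemma mat_vec_zero: "A \<in> carrier_mat n m \<Longrightarrow> A *\<^sub>v 0\<^sub>v m = 0\<^sub>v n"
  by (intro eq_vecI, auto)

lemma vec4_nz: assumes "v \<in> carrier_vec 4" "v \<noteq> 0\<^sub>v 4" shows "\<exists>m<4. v $ m \<noteq> 0"
proof (rule ccontr)
  assume "\<not> ?thesis"
  hence "v = 0\<^sub>v 4" using assms(1) by (intro eq_vecI, auto)
  thus False using assms(2) by simp
qed

lemma pencil_struct:
  fixes A B M :: "real mat"
  assumes sA: "sym4 A" and sB: "sym4 B" and inv: "invertible_mat A" and AM: "A * M = B" and M: "M \<in> carrier_mat 4 4"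
  and p: "p \<in> carrier_vec 4" and q: "q \<in> carrier_vec 4" and p0: "p \<noteq> 0\<^sub>v 4" and q0: "q \<noteq> 0\<^sub>v 4" and qp: "q \<bullet> p = 0"
  and Me: "\<forall>i<4. \<forall>j<4. M $$ (i,j) = (if i = j then l else 0) + p$i * q$j"
  shows "\<exists>t. t \<noteq> 0 \<and> p \<bullet> (A *\<^sub>v p) = 0 \<and> (\<forall>i<4. \<forall>j<4. B $$ (i,j) = l * A $$ (i,j) + t * ((A *\<^sub>v p)$i * (A *\<^sub>v p)$j))"
proof -
  have A: "A \<in> carrier_mat 4 4" using sA by (rule sym4_carrier)
  define a where "a = A *\<^sub>v p"
  have a: "a \<in> carrier_vec 4" unfolding a_def using A p by simp
  have ai: "a $ i = A$$(i,0) * p$0 + A$$(i,1) * p$1 + A$$(i,2) * p$2 + A$$(i,3) * p$3" if "i < 4" for i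
    unfolding a_def by (rule mulv4[OF A p that])
  have Me': "\<And>i j. i < 4 \<Longrightarrow> j < 4 \<Longrightarrow> M $$ (i,j) = (if i = j then l else 0) + p$i * q$j" using Me by auto
  have Be: "B $$ (i,j) = l * A $$ (i,j) + a$i * q$j" if i: "i < 4" and j: "j < 4" for i j
  proof -
    have "B $$ (i,j) = A$$(i,0) * M$$(0,j) + A$$(i,1) * M$$(1,j) + A$$(i,2) * M$$(2,j) + A$$(i,3) * M$$(3,j)"
      unfolding AM[symmetric] by (rule mult4[OF A M i j])
    also have "\<dots> = l * A $$ (i,j) + a$i * q$j" unfolding ai[OF i] using j
      by (simp add: Me' less4, elim disjE, simp_all add: algebra_simps)
    finally show ?thesis .
  qed
  have symaq: "a$i * q$j = a$j * q$i" if "i < 4" "j < 4" for i j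
    using Be[OF that] Be[OF that(2,1)] sym4_ent[OF sA that] sym4_ent[OF sB that] by simp
  have a0: "a \<noteq> 0\<^sub>v 4"
  proof
    assume a0: "a = 0\<^sub>v 4"
    obtain Ai where Ai: "Ai \<in> carrier_mat 4 4" "Ai * A = 1\<^sub>m 4" using invertible_inv[OF A inv] by auto
    have "p = (Ai * A) *\<^sub>v p" unfolding Ai(2) using p by simp
    also have "\<dots> = Ai *\<^sub>v a" unfolding a_def by (rule assoc_mult_mat_vec[OF Ai(1) A p])
    also have "\<dots> = 0\<^sub>v 4" unfolding a0 by (rule mat_vec_zero[OF Ai(1)])
    finally show False using p0 by simp
  qed
  obtain m where m: "m < 4" "a $ m \<noteq> 0" using vec4_nz[OF a a0] by auto
  define t where "t = q $ m / a $ m"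
  have qj: "q $ j = t * a $ j" if "j < 4" for j
    using symaq[OF m(1) that] m(2) unfolding t_def by (simp add: field_simps)
  have t0: "t \<noteq> 0"
  proof
    assume "t = 0"
    hence "q = 0\<^sub>v 4" using q qj by (intro eq_vecI, auto)
    thus False using q0 by simp
  qed
  have "q \<bullet> p = t * (p \<bullet> a)" unfolding sprod4[OF q p] sprod4[OF p a] using qj by (simp add: algebra_simps)
  hence pa: "p \<bullet> a = 0" using qp t0 by simp
  show ?thesis using t0 pa Be qj unfolding a_def[symmetric] by (intro exI[of _ t], auto simp: algebra_simps)
qed


definition bf :: "real mat \<Rightarrow> real vec \<Rightarrow> real vec \<Rightarrow> real" where
  "bf A x y = x \<bullet> (A *\<^sub>v y)"

context
  fixes A :: "real mat"
  assumes A: "A \<in> carrier_mat 4 4"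
begin

lemma bf_add_l: "x \<in> carrier_vec 4 \<Longrightarrow> y \<in> carrier_vec 4 \<Longrightarrow> z \<in> carrier_vec 4 \<Longrightarrow> bf A (x + y) z = bf A x z + bf A y z"
  unfolding bf_def using A by (simp add: add_scalar_prod_distrib[of _ 4])
lemma bf_add_r: "x \<in> carrier_vec 4 \<Longrightarrow> y \<in> carrier_vec 4 \<Longrightarrow> z \<in> carrier_vec 4 \<Longrightarrow> bf A x (y + z) = bf A x y + bf A x z"
  unfolding bf_def using A by (simp add: mult_add_distrib_mat_vec[OF A] scalar_prod_add_distrib[of _ 4])
lemma bf_minus_l: "x \<in> carrier_vec 4 \<Longrightarrow> y \<in> carrier_vec 4 \<Longrightarrow> z \<in> carrier_vec 4 \<Longrightarrow> bf A (x - y) z = bf A x z - bf A y z"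
  unfolding bf_def using A by (simp add: minus_scalar_prod_distrib[of _ 4])
lemma bf_minus_r: "x \<in> carrier_vec 4 \<Longrightarrow> y \<in> carrier_vec 4 \<Longrightarrow> z \<in> carrier_vec 4 \<Longrightarrow> bf A x (y - z) = bf A x y - bf A x z"
  unfolding bf_def using A by (simp add: mult_minus_distrib_mat_vec[OF A] scalar_prod_minus_distrib[of _ 4])
lemma bf_smult_l: "x \<in> carrier_vec 4 \<Longrightarrow> z \<in> carrier_vec 4 \<Longrightarrow> bf A (c \<cdot>\<^sub>v x) z = c * bf A x z"
  unfolding bf_def using A by simp
lemma bf_smult_r: "x \<in> carrier_vec 4 \<Longrightarrow> z \<in> carrier_vec 4 \<Longrightarrow> bf A x (c \<cdot>\<^sub>v z) = c * bf A x z"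
  unfolding bf_def using A by (simp add: mult_mat_vec[OF A])
lemma bf_zero_l: "z \<in> carrier_vec 4 \<Longrightarrow> bf A (0\<^sub>v 4) z = 0"
  unfolding bf_def using A by simp
lemma bf_zero_r: "z \<in> carrier_vec 4 \<Longrightarrow> bf A z (0\<^sub>v 4) = 0"
  unfolding bf_def using A by (simp add: mat_vec_zero[OF A])

lemmas bf_lin = bf_add_l bf_add_r bf_minus_l bf_minus_r bf_smult_l bf_smult_r bf_zero_l bf_zero_r

end

lemma bf_sym: assumes sA: "sym4 A" and x: "x \<in> carrier_vec 4" and y: "y \<in> carrier_vec 4"
  shows "bf A x y = bf A y x"
proof -
  have A: "A \<in> carrier_mat 4 4" using sA by (rule sym4_carrier)
  have s: "A$$(1,0) = A$$(0,1)" "A$$(2,0) = A$$(0,2)" "A$$(3,0) = A$$(0,3)"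
    "A$$(2,1) = A$$(1,2)" "A$$(3,1) = A$$(1,3)" "A$$(3,2) = A$$(2,3)"
    using sym4_ent[OF sA] by auto
  show ?thesis unfolding bf_def sprod4[OF x mult_mat_vec_carrier[OF A y]] sprod4[OF y mult_mat_vec_carrier[OF A x]]
    by (simp add: mulv4[OF A x] mulv4[OF A y] s s[unfolded One_nat_def] algebra_simps)
qed

lemma sprod_self_zero: assumes z: "(z :: real vec) \<in> carrier_vec 4" and zz: "z \<bullet> z = 0" shows "z = 0\<^sub>v 4"
proof -
  have "z$0^2 + z$1^2 + z$2^2 + z$3^2 = 0" using zz unfolding sprod4[OF z z] by (simp add: power2_eq_square)
  hence "z$0 = 0 \<and> z$1 = 0 \<and> z$2 = 0 \<and> z$3 = 0"
    by (smt (verit) zero_le_power2 zero_eq_power2)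
  thus ?thesis using z by (intro eq_vecI, auto simp: less4)
qed

lemma bf_nondeg: assumes A: "A \<in> carrier_mat 4 4" and inv: "invertible_mat A" and z: "z \<in> carrier_vec 4"
  and all: "\<forall>y\<in>carrier_vec 4. bf A z y = 0" shows "z = 0\<^sub>v 4"
proof -
  obtain Ai where Ai: "Ai \<in> carrier_mat 4 4" "A * Ai = 1\<^sub>m 4" using invertible_inv[OF A inv] by auto
  have "A *\<^sub>v (Ai *\<^sub>v z) = z" using assoc_mult_mat_vec[OF A Ai(1) z, symmetric] Ai(2) z by simp
  hence "z \<bullet> z = 0" using all[rule_format, of "Ai *\<^sub>v z"] Ai z unfolding bf_def by simp
  thus ?thesis by (rule sprod_self_zero[OF z])
qed


lemma span3_false: assumes r: "r0 \<in> carrier_vec 4" "r1 \<in> carrier_vec 4" "r2 \<in> carrier_vec 4"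
  and cf: "\<And>i j. i < 4 \<Longrightarrow> j < 4 \<Longrightarrow> (if i = j then 1 else 0) = c0 j * r0$i + c1 j * r1$i + (c2 j * r2$i :: real)"
  shows False
proof -
  define R :: "real mat" where "R = mat 4 4 (\<lambda>(i,k). if k = 0 then r0$i else if k = 1 then r1$i else if k = 2 then r2$i else 0)"
  define C :: "real mat" where "C = mat 4 4 (\<lambda>(k,j). if k = 0 then c0 j else if k = 1 then c1 j else if k = 2 then c2 j else 0)"
  have R: "R \<in> carrier_mat 4 4" and C: "C \<in> carrier_mat 4 4" unfolding R_def C_def by auto
  have "R * C = 1\<^sub>m 4"
  proof (rule eq_matI)
    fix i j assume "i < dim_row (1\<^sub>m 4 :: real mat)" "j < dim_col (1\<^sub>m 4 :: real mat)"
    hence ij: "i < 4" "j < 4" by auto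
    show "(R * C) $$ (i,j) = 1\<^sub>m 4 $$ (i,j)"
      unfolding mult4[OF R C ij] using ij cf[OF ij] by (simp add: R_def C_def algebra_simps)
  qed (auto simp: R_def C_def)
  hence "det R * det C = 1" using det_mult[OF R C] by simp
  moreover have "det R = 0" by (subst det4[OF R], simp add: R_def)
  ultimately show False by simp
qed

lemma nondeg_pi:
  fixes A :: "real mat"
  assumes sA: "sym4 A" and inv: "invertible_mat A"
    and r: "r0 \<in> carrier_vec 4" "r1 \<in> carrier_vec 4" "r2 \<in> carrier_vec 4"
    and w: "w0 \<in> carrier_vec 4" "w1 \<in> carrier_vec 4" "w2 \<in> carrier_vec 4"
    and orth: "\<And>x. x \<in> carrier_vec 4 \<Longrightarrow>
      bf A (x - bf A x w0 \<cdot>\<^sub>v r0 - bf A x w1 \<cdot>\<^sub>v r1 - bf A x w2 \<cdot>\<^sub>v r2) r0 = 0 \<and>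
      bf A (x - bf A x w0 \<cdot>\<^sub>v r0 - bf A x w1 \<cdot>\<^sub>v r1 - bf A x w2 \<cdot>\<^sub>v r2) r1 = 0 \<and>
      bf A (x - bf A x w0 \<cdot>\<^sub>v r0 - bf A x w1 \<cdot>\<^sub>v r1 - bf A x w2 \<cdot>\<^sub>v r2) r2 = 0"
  shows "\<exists>x\<in>carrier_vec 4. bf A (x - bf A x w0 \<cdot>\<^sub>v r0 - bf A x w1 \<cdot>\<^sub>v r1 - bf A x w2 \<cdot>\<^sub>v r2)
                                (x - bf A x w0 \<cdot>\<^sub>v r0 - bf A x w1 \<cdot>\<^sub>v r1 - bf A x w2 \<cdot>\<^sub>v r2) \<noteq> 0"
proof (rule ccontr)
  define pi where "pi = (\<lambda>x. x - bf A x w0 \<cdot>\<^sub>v r0 - bf A x w1 \<cdot>\<^sub>v r1 - bf A x w2 \<cdot>\<^sub>v r2)"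
  assume "\<not> ?thesis"
  hence H: "\<And>x. x \<in> carrier_vec 4 \<Longrightarrow> bf A (pi x) (pi x) = 0" unfolding pi_def by auto
  have A: "A \<in> carrier_mat 4 4" using sA by (rule sym4_carrier)
  have pic: "\<And>x. x \<in> carrier_vec 4 \<Longrightarrow> pi x \<in> carrier_vec 4" unfolding pi_def using r by simp
  have orth': "\<And>x. x \<in> carrier_vec 4 \<Longrightarrow> bf A (pi x) r0 = 0 \<and> bf A (pi x) r1 = 0 \<and> bf A (pi x) r2 = 0"
    unfolding pi_def by (rule orth)
  have piadd: "pi (x + y) = pi x + pi y" if x: "x \<in> carrier_vec 4" and y: "y \<in> carrier_vec 4" for x y
    unfolding pi_def using x y r w by (intro eq_vecI, simp_all add: bf_add_l[OF A] algebra_simps)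
  have C1: "bf A (pi x) (pi y) = 0" if x: "x \<in> carrier_vec 4" and y: "y \<in> carrier_vec 4" for x y
  proof -
    have "0 = bf A (pi (x + y)) (pi (x + y))" using H x y by simp
    also have "\<dots> = bf A (pi x) (pi x) + bf A (pi x) (pi y) + bf A (pi y) (pi x) + bf A (pi y) (pi y)"
      unfolding piadd[OF x y] using pic[OF x] pic[OF y] by (simp add: bf_add_l[OF A] bf_add_r[OF A])
    also have "\<dots> = 2 * bf A (pi x) (pi y)" using H[OF x] H[OF y] bf_sym[OF sA pic[OF x] pic[OF y]] by simp
    finally show ?thesis by simp
  qed
  have C2: "bf A (pi x) y = 0" if x: "x \<in> carrier_vec 4" and y: "y \<in> carrier_vec 4" for x y
  proof -
    have dec: "y = pi y + bf A y w0 \<cdot>\<^sub>v r0 + bf A y w1 \<cdot>\<^sub>v r1 + bf A y w2 \<cdot>\<^sub>v r2"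
      unfolding pi_def using y r by (intro eq_vecI, simp_all)
    have "bf A (pi x) y = bf A (pi x) (pi y) + bf A y w0 * bf A (pi x) r0 + bf A y w1 * bf A (pi x) r1 + bf A y w2 * bf A (pi x) r2"
      apply (subst dec) using pic[OF x] pic[OF y] r by (simp add: bf_add_r[OF A] bf_smult_r[OF A])
    thus ?thesis using C1[OF x y] orth'[OF x] by simp
  qed
  have C3: "pi x = 0\<^sub>v 4" if x: "x \<in> carrier_vec 4" for x
    by (rule bf_nondeg[OF A inv pic[OF x]], use C2[OF x] in auto)
  show False
  proof (rule span3_false[OF r])
    fix i j :: nat assume ij: "i < 4" "j < 4"
    have "pi (unit_vec 4 j) $ i = 0" using C3[of "unit_vec 4 j"] ij by simp
    thus "(if i = j then 1 else 0) = bf A (unit_vec 4 j) w0 * r0$i + bf A (unit_vec 4 j) w1 * r1$i + bf A (unit_vec 4 j) w2 * r2$i"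
      unfolding pi_def using ij r by simp
  qed
qed


lemma norm_sq: fixes g :: real assumes "g \<noteq> 0" shows "(1 / sqrt \<bar>g\<bar>) * (1 / sqrt \<bar>g\<bar>) * g \<in> {-1, 1}"
proof -
  have "(1 / sqrt \<bar>g\<bar>) * (1 / sqrt \<bar>g\<bar>) = 1 / \<bar>g\<bar>"
  proof -
    have "sqrt \<bar>g\<bar> * sqrt \<bar>g\<bar> = \<bar>g\<bar>" by simp
    moreover have "(1 / sqrt \<bar>g\<bar>) * (1 / sqrt \<bar>g\<bar>) = 1 / (sqrt \<bar>g\<bar> * sqrt \<bar>g\<bar>)" by simp
    ultimately show ?thesis by simp
  qed
  thus ?thesis using assms by (cases "g > 0", auto)
qed

lemma inv_vec_nz: fixes A :: "real mat" assumes A: "A \<in> carrier_mat 4 4" and inv: "invertible_mat A"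
  and p: "p \<in> carrier_vec 4" and p0: "p \<noteq> 0\<^sub>v 4" shows "A *\<^sub>v p \<noteq> 0\<^sub>v 4"
proof
  assume a0: "A *\<^sub>v p = 0\<^sub>v 4"
  obtain Ai where Ai: "Ai \<in> carrier_mat 4 4" "Ai * A = 1\<^sub>m 4" using invertible_inv[OF A inv] by auto
  have "p = (Ai * A) *\<^sub>v p" unfolding Ai(2) using p by simp
  also have "\<dots> = Ai *\<^sub>v (A *\<^sub>v p)" by (rule assoc_mult_mat_vec[OF Ai(1) A p])
  also have "\<dots> = 0\<^sub>v 4" unfolding a0 by (rule mat_vec_zero[OF Ai(1)])
  finally show False using p0 by simp
qed

lemma frame:
  fixes A :: "real mat"
  assumes sA: "sym4 A" and inv: "invertible_mat A" and p: "p \<in> carrier_vec 4" and p0: "p \<noteq> 0\<^sub>v 4"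
    and pp: "bf A p p = 0"
  shows "\<exists>u z3 z4 f3 f4. u \<in> carrier_vec 4 \<and> z3 \<in> carrier_vec 4 \<and> z4 \<in> carrier_vec 4 \<and> f3 \<in> {-1,1} \<and> f4 \<in> {-1,1} \<and>
     bf A u p = 1 \<and> bf A u u = 0 \<and> bf A z3 p = 0 \<and> bf A z3 u = 0 \<and> bf A z4 p = 0 \<and> bf A z4 u = 0 \<and>
     bf A z3 z4 = 0 \<and> bf A z3 z3 = f3 \<and> bf A z4 z4 = f4"
proof -
  have A: "A \<in> carrier_mat 4 4" using sA by (rule sym4_carrier)
  note L = bf_lin[OF A]
  define a where "a = A *\<^sub>v p"
  have a: "a \<in> carrier_vec 4" unfolding a_def using A p by simp
  have a0: "a \<noteq> 0\<^sub>v 4" unfolding a_def by (rule inv_vec_nz[OF A inv p p0])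
  have aa: "a \<bullet> a \<noteq> 0" using sprod_self_zero[OF a] a0 by auto
  define u0 where "u0 = (1 / (a \<bullet> a)) \<cdot>\<^sub>v a"
  have u0: "u0 \<in> carrier_vec 4" unfolding u0_def using a by simp
  have u0p: "bf A u0 p = 1" unfolding bf_def a_def[symmetric] u0_def using a aa by simp
  define u where "u = u0 - (bf A u0 u0 / 2) \<cdot>\<^sub>v p"
  have u: "u \<in> carrier_vec 4" unfolding u_def using u0 p by simp
  have pu0: "bf A p u0 = 1" using bf_sym[OF sA p u0] u0p by simp
  have up: "bf A u p = 1" unfolding u_def using u0 p by (simp add: L u0p pp)
  have uu: "bf A u u = 0" unfolding u_def using u0 p by (simp add: L u0p pu0 pp)
  have pu: "bf A p u = 1" using bf_sym[OF sA p u] up by simp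
  have z0: "0\<^sub>v 4 \<in> carrier_vec 4" by simp
  from nondeg_pi[OF sA inv p u z0 u p z0]
  obtain x where x: "x \<in> carrier_vec 4" and
    gx: "bf A (x - bf A x u \<cdot>\<^sub>v p - bf A x p \<cdot>\<^sub>v u - bf A x (0\<^sub>v 4) \<cdot>\<^sub>v 0\<^sub>v 4)
              (x - bf A x u \<cdot>\<^sub>v p - bf A x p \<cdot>\<^sub>v u - bf A x (0\<^sub>v 4) \<cdot>\<^sub>v 0\<^sub>v 4) \<noteq> 0"
    using p u by (auto simp: L pp up pu uu)
  define y where "y = x - bf A x u \<cdot>\<^sub>v p - bf A x p \<cdot>\<^sub>v u"
  have y: "y \<in> carrier_vec 4" unfolding y_def using x p u by simp
  have yeq: "x - bf A x u \<cdot>\<^sub>v p - bf A x p \<cdot>\<^sub>v u - bf A x (0\<^sub>v 4) \<cdot>\<^sub>v 0\<^sub>v 4 = y"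
    unfolding y_def using x p u by (intro eq_vecI, auto)
  define g where "g = bf A y y"
  have g: "g \<noteq> 0" using gx unfolding yeq g_def .
  have yp: "bf A y p = 0" unfolding y_def using x p u by (simp add: L pp up pu uu)
  have yu: "bf A y u = 0" unfolding y_def using x p u by (simp add: L pp up pu uu)
  define c where "c = 1 / sqrt \<bar>g\<bar>"
  define z3 where "z3 = c \<cdot>\<^sub>v y"
  define f3 where "f3 = c * c * g"
  have z3: "z3 \<in> carrier_vec 4" unfolding z3_def using y by simp
  have f3: "f3 \<in> {-1,1}" unfolding f3_def c_def by (rule norm_sq[OF g])
  have z3z3: "bf A z3 z3 = f3" unfolding z3_def f3_def g_def using y by (simp add: L)
  have z3p: "bf A z3 p = 0" unfolding z3_def using y p by (simp add: L yp)
  have z3u: "bf A z3 u = 0" unfolding z3_def using y u by (simp add: L yu)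
  have pz3: "bf A p z3 = 0" using bf_sym[OF sA p z3] z3p by simp
  have uz3: "bf A u z3 = 0" using bf_sym[OF sA u z3] z3u by simp
  have ff3: "f3 * f3 = 1" using f3 by auto
  have f3z3: "f3 \<cdot>\<^sub>v z3 \<in> carrier_vec 4" using z3 by simp
  from nondeg_pi[OF sA inv p u z3 u p f3z3]
  obtain x2 where x2: "x2 \<in> carrier_vec 4" and
    gx2: "bf A (x2 - bf A x2 u \<cdot>\<^sub>v p - bf A x2 p \<cdot>\<^sub>v u - bf A x2 (f3 \<cdot>\<^sub>v z3) \<cdot>\<^sub>v z3)
              (x2 - bf A x2 u \<cdot>\<^sub>v p - bf A x2 p \<cdot>\<^sub>v u - bf A x2 (f3 \<cdot>\<^sub>v z3) \<cdot>\<^sub>v z3) \<noteq> 0"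
    using p u z3 by (auto simp: L pp up pu uu z3p z3u pz3 uz3 z3z3 algebra_simps ff3)
  define y2 where "y2 = x2 - bf A x2 u \<cdot>\<^sub>v p - bf A x2 p \<cdot>\<^sub>v u - bf A x2 (f3 \<cdot>\<^sub>v z3) \<cdot>\<^sub>v z3"
  have y2: "y2 \<in> carrier_vec 4" unfolding y2_def using x2 p u z3 by simp
  define g2 where "g2 = bf A y2 y2"
  have g2: "g2 \<noteq> 0" using gx2 unfolding y2_def[symmetric] g2_def .
  have y2p: "bf A y2 p = 0" unfolding y2_def using x2 p u z3 by (simp add: L pp up pu uu z3p z3u pz3 uz3)
  have y2u: "bf A y2 u = 0" unfolding y2_def using x2 p u z3 by (simp add: L pp up pu uu z3p z3u pz3 uz3)
  have y2z3: "bf A y2 z3 = 0" unfolding y2_def using x2 p u z3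
    by (simp add: L pp up pu uu z3p z3u pz3 uz3 z3z3 algebra_simps ff3)
  define c2 where "c2 = 1 / sqrt \<bar>g2\<bar>"
  define z4 where "z4 = c2 \<cdot>\<^sub>v y2"
  define f4 where "f4 = c2 * c2 * g2"
  have z4: "z4 \<in> carrier_vec 4" unfolding z4_def using y2 by simp
  have f4: "f4 \<in> {-1,1}" unfolding f4_def c2_def by (rule norm_sq[OF g2])
  have z4z4: "bf A z4 z4 = f4" unfolding z4_def f4_def g2_def using y2 by (simp add: L)
  have z4p: "bf A z4 p = 0" unfolding z4_def using y2 p by (simp add: L y2p)
  have z4u: "bf A z4 u = 0" unfolding z4_def using y2 u by (simp add: L y2u)
  have z4z3: "bf A z4 z3 = 0" unfolding z4_def using y2 z3 by (simp add: L y2z3)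
  have z3z4: "bf A z3 z4 = 0" using bf_sym[OF sA z3 z4] z4z3 by simp
  show ?thesis using u z3 z4 f3 f4 up uu z3p z3u z4p z4u z3z4 z3z3 z4z4 by blast
qed


lemma qmq_ent: fixes Q M :: "real mat" assumes Q: "Q \<in> carrier_mat 4 4" and M: "M \<in> carrier_mat 4 4"
  and ij: "i < 4" "j < 4"
  shows "(transpose_mat Q * M * Q) $$ (i,j) = bf M (col Q i) (col Q j)"
proof -
  have QM: "transpose_mat Q * M \<in> carrier_mat 4 4" using Q M by simp
  have QT: "transpose_mat Q \<in> carrier_mat 4 4" using Q by simp
  have cQ: "\<And>k. col Q k \<in> carrier_vec 4" using Q by (auto intro!: carrier_vecI)
  have dQ: "dim_row Q = 4" "dim_col Q = 4" using Q by auto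
  show ?thesis unfolding mult4[OF QM Q ij] bf_def sprod4[OF cQ mult_mat_vec_carrier[OF M cQ]]
    using ij by (simp add: mult4[OF QT M] mulv4[OF M cQ] dQ algebra_simps)
qed

lemma bf_smult_mat: fixes A :: "real mat" assumes A: "A \<in> carrier_mat 4 4" and x: "x \<in> carrier_vec 4" and y: "y \<in> carrier_vec 4"
  shows "bf (c \<cdot>\<^sub>m A) x y = c * bf A x y"
proof -
  have "(c \<cdot>\<^sub>m A) *\<^sub>v y = c \<cdot>\<^sub>v (A *\<^sub>v y)" using A y by (intro eq_vecI, auto)
  thus ?thesis unfolding bf_def using A x y by simp
qed

lemma exists_canon:
  fixes A B :: "real mat"
  assumes sA: "sym4 A" and sB: "sym4 B" and inv: "invertible_mat A"
    and p: "p \<in> carrier_vec 4" and p0: "p \<noteq> 0\<^sub>v 4" and t0: "t \<noteq> 0" and pp: "bf A p p = 0"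
    and Bent: "\<forall>i<4. \<forall>j<4. B $$ (i,j) = l * A $$ (i,j) + t * ((A *\<^sub>v p)$i * (A *\<^sub>v p)$j)"
  shows "\<exists>e\<in>{-1,1}. pencil_equiv A B (cA e) cB"
proof -
  have A: "A \<in> carrier_mat 4 4" using sA by (rule sym4_carrier)
  have B: "B \<in> carrier_mat 4 4" using sB by (rule sym4_carrier)
  note L = bf_lin[OF A]
  from frame[OF sA inv p p0 pp] obtain u z3 z4 f3 f4 where
    u: "u \<in> carrier_vec 4" and z3: "z3 \<in> carrier_vec 4" and z4: "z4 \<in> carrier_vec 4"
    and f3: "f3 \<in> {-1,1}" and f4: "f4 \<in> {-1,1}" and
    fr: "bf A u p = 1" "bf A u u = 0" "bf A z3 p = 0" "bf A z3 u = 0" "bf A z4 p = 0" "bf A z4 u = 0"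
     "bf A z3 z4 = 0" "bf A z3 z3 = f3" "bf A z4 z4 = f4" by blast
  have fr2: "bf A p u = 1" "bf A p z3 = 0" "bf A u z3 = 0" "bf A p z4 = 0" "bf A u z4 = 0" "bf A z4 z3 = 0"
    using fr bf_sym[OF sA] p u z3 z4 by metis+
  define s where "s = - f3"
  define Q :: "real mat" where "Q = mat 4 4 (\<lambda>(i,j). if j = 0 then p$i else if j = 1 then s * u$i else if j = 2 then z3$i else z4$i)"
  have Q: "Q \<in> carrier_mat 4 4" unfolding Q_def by simp
  have cols: "col Q 0 = p" "col Q 1 = s \<cdot>\<^sub>v u" "col Q 2 = z3" "col Q 3 = z4"
    using p u z3 z4 unfolding Q_def by (auto intro!: eq_vecI)
  note cols' = cols cols[unfolded One_nat_def]
  define e where "e = f3 * f4"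
  have e: "e \<in> {-1,1}" using f3 f4 unfolding e_def by auto
  have ff: "f3 * f3 = 1" "s * s = 1" "f3 * s = -1" using f3 unfolding s_def by auto
  define MA where "MA = f3 \<cdot>\<^sub>m A + 0 \<cdot>\<^sub>m B"
  have MA: "MA = f3 \<cdot>\<^sub>m A" unfolding MA_def using A B by (intro eq_matI, auto)
  have MAc: "MA \<in> carrier_mat 4 4" unfolding MA using A by simp
  have eA: "transpose_mat Q * MA * Q = cA e"
  proof (rule eq_matI)
    fix i j assume "i < dim_row (cA e)" "j < dim_col (cA e)"
    hence ij: "i < 4" "j < 4" by auto
    show "(transpose_mat Q * MA * Q) $$ (i,j) = cA e $$ (i,j)"
      unfolding qmq_ent[OF Q MAc ij] unfolding MA
      using ij by (auto simp: less4 cols' bf_smult_mat[OF A] p u z3 z4 L fr fr2 pp cA_ent' ff e_def)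
  qed (use Q in auto)
  define a where "a = A *\<^sub>v p"
  have a: "a \<in> carrier_vec 4" unfolding a_def using A p by simp
  define MB where "MB = (l / t) \<cdot>\<^sub>m A + (- 1 / t) \<cdot>\<^sub>m B"
  have MB: "MB = mat 4 4 (\<lambda>(i,j). - (a$i * a$j))" unfolding MB_def a_def
    using A B Bent t0 by (intro eq_matI, auto simp: field_simps)
  have MBc: "MB \<in> carrier_mat 4 4" unfolding MB by simp
  have bfMB: "bf MB x y = - (bf A x p * bf A y p)" if x: "x \<in> carrier_vec 4" and y: "y \<in> carrier_vec 4" for x y
  proof -
    have "MB *\<^sub>v y = (- (y \<bullet> a)) \<cdot>\<^sub>v a" unfolding MB using a y
      by (intro eq_vecI, auto simp: sprod4 algebra_simps)
    thus ?thesis unfolding bf_def a_def[symmetric] using x y a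
      by (simp add: comm_scalar_prod[of y 4 a])
  qed
  have eB: "transpose_mat Q * MB * Q = cB"
  proof (rule eq_matI)
    fix i j assume "i < dim_row cB" "j < dim_col cB"
    hence ij: "i < 4" "j < 4" by auto
    show "(transpose_mat Q * MB * Q) $$ (i,j) = cB $$ (i,j)"
      unfolding qmq_ent[OF Q MBc ij]
      using ij by (auto simp: less4 cols' bfMB p u z3 z4 L fr fr2 pp cB_ent' ff)
  qed (use Q in auto)
  have dQ: "det Q \<noteq> 0"
  proof
    assume "det Q = 0"
    hence "det (transpose_mat Q * MA * Q) = 0" using Q MAc by (simp add: det_mult[of _ 4])
    thus False unfolding eA det_cA using e by auto
  qed
  have invQ: "invertible_mat Q" by (rule det_invertible[OF Q dQ])
  have "pencil_equiv A B (cA e) cB" unfolding pencil_equiv_def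
    using Q invQ eA[unfolded MA_def] eB[unfolded MB_def] f3 t0
    by (intro exI[of _ Q] exI[of _ f3] exI[of _ 0] exI[of _ "l/t"] exI[of _ "-1/t"], auto)
  thus ?thesis using e by auto
qed


definition KA :: "real \<Rightarrow> real \<Rightarrow> real \<Rightarrow> real mat" where
  "KA eps e2 e3 = mat_of_rows_list 4 [[0, eps, 0, 0], [eps, 0, 0, 0], [0, 0, e2, 0], [0, 0, 0, e3]]"
definition KB :: "real \<Rightarrow> real \<Rightarrow> real \<Rightarrow> real \<Rightarrow> real mat" where
  "KB eps l e2 e3 = mat_of_rows_list 4 [[0, eps * l, 0, 0], [eps * l, eps, 0, 0],
                              [0, 0, e2 * l, 0], [0, 0, 0, e3 * l]]"

lemma canon_unfold: "canon_sign_211 A B l eps \<longleftrightarrow> eps \<in> {-1, 1} \<and>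
     (\<exists>Q e2 e3. Q \<in> carrier_mat 4 4 \<and> invertible_mat Q \<and> e2 \<in> {-1, 1} \<and> e3 \<in> {-1, 1} \<and>
        transpose_mat Q * A * Q = KA eps e2 e3 \<and> transpose_mat Q * B * Q = KB eps l e2 e3)"
  unfolding canon_sign_211_def KA_def KB_def ..

lemma KA_carrier[simp]: "KA eps e2 e3 \<in> carrier_mat 4 4" unfolding KA_def carrier_mat_def by (simp add: mat_of_rows_list_def)
lemma KB_carrier[simp]: "KB eps l e2 e3 \<in> carrier_mat 4 4" unfolding KB_def carrier_mat_def by (simp add: mat_of_rows_list_def)
lemma KA_dims[simp]: "dim_row (KA eps e2 e3) = 4" "dim_col (KA eps e2 e3) = 4" by (simp_all add: KA_def mat_of_rows_list_def)
lemma KB_dims[simp]: "dim_row (KB eps l e2 e3) = 4" "dim_col (KB eps l e2 e3) = 4" by (simp_all add: KB_def mat_of_rows_list_def)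

lemma KA_ent0: "KA eps e2 e3 $$ (0,0) = 0" "KA eps e2 e3 $$ (0,1) = eps" "KA eps e2 e3 $$ (0,2) = 0" "KA eps e2 e3 $$ (0,3) = 0"
  "KA eps e2 e3 $$ (1,0) = eps" "KA eps e2 e3 $$ (1,1) = 0" "KA eps e2 e3 $$ (1,2) = 0" "KA eps e2 e3 $$ (1,3) = 0"
  "KA eps e2 e3 $$ (2,0) = 0" "KA eps e2 e3 $$ (2,1) = 0" "KA eps e2 e3 $$ (2,2) = e2" "KA eps e2 e3 $$ (2,3) = 0"
  "KA eps e2 e3 $$ (3,0) = 0" "KA eps e2 e3 $$ (3,1) = 0" "KA eps e2 e3 $$ (3,2) = 0" "KA eps e2 e3 $$ (3,3) = e3"
  by (simp_all add: KA_def mat_of_rows_list_def)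
lemma KB_ent0: "KB eps l e2 e3 $$ (0,0) = 0" "KB eps l e2 e3 $$ (0,1) = eps * l" "KB eps l e2 e3 $$ (0,2) = 0" "KB eps l e2 e3 $$ (0,3) = 0"
  "KB eps l e2 e3 $$ (1,0) = eps * l" "KB eps l e2 e3 $$ (1,1) = eps" "KB eps l e2 e3 $$ (1,2) = 0" "KB eps l e2 e3 $$ (1,3) = 0"
  "KB eps l e2 e3 $$ (2,0) = 0" "KB eps l e2 e3 $$ (2,1) = 0" "KB eps l e2 e3 $$ (2,2) = e2 * l" "KB eps l e2 e3 $$ (2,3) = 0"
  "KB eps l e2 e3 $$ (3,0) = 0" "KB eps l e2 e3 $$ (3,1) = 0" "KB eps l e2 e3 $$ (3,2) = 0" "KB eps l e2 e3 $$ (3,3) = e3 * l"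
  by (simp_all add: KB_def mat_of_rows_list_def)
lemmas KA_ent = KA_ent0 KA_ent0[unfolded One_nat_def]
lemmas KB_ent = KB_ent0 KB_ent0[unfolded One_nat_def]

lemma bf_lin_mat: fixes A B :: "real mat" assumes A: "A \<in> carrier_mat 4 4" and B: "B \<in> carrier_mat 4 4"
  and x: "x \<in> carrier_vec 4" and y: "y \<in> carrier_vec 4"
  shows "bf (a \<cdot>\<^sub>m A + b \<cdot>\<^sub>m B) x y = a * bf A x y + b * bf B x y"
    "bf (a \<cdot>\<^sub>m A - B) x y = a * bf A x y - bf B x y"
proof -
  have "(a \<cdot>\<^sub>m A + b \<cdot>\<^sub>m B) *\<^sub>v y = a \<cdot>\<^sub>v (A *\<^sub>v y) + b \<cdot>\<^sub>v (B *\<^sub>v y)" using A B y by (intro eq_vecI, auto simp: sprod4 algebra_simps)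
  thus "bf (a \<cdot>\<^sub>m A + b \<cdot>\<^sub>m B) x y = a * bf A x y + b * bf B x y" unfolding bf_def using A B x y
    by (simp add: scalar_prod_add_distrib[of _ 4])
  have MA: "a \<cdot>\<^sub>m A - B \<in> carrier_mat 4 4" using A B by (simp add: minus_carrier_mat)
  have "(a \<cdot>\<^sub>m A - B) *\<^sub>v y = a \<cdot>\<^sub>v (A *\<^sub>v y) - (B *\<^sub>v y)" using A B y MA
    by (intro eq_vecI) (simp_all add: mulv4[OF MA y] mulv4[OF A y] mulv4[OF B y] algebra_simps del: index_mult_mat_vec)
  thus "bf (a \<cdot>\<^sub>m A - B) x y = a * bf A x y - bf B x y" unfolding bf_def using A B x y
    by (simp add: scalar_prod_minus_distrib[of _ 4])
qed

lemma det_neg4: fixes S :: "real mat" assumes "S \<in> carrier_mat 4 4" shows "det (- S) = det S"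
proof -
  have "- S = (-1) \<cdot>\<^sub>m S" using assms by (intro eq_matI, auto)
  thus ?thesis using assms by simp
qed

lemma parity_canon:
  fixes A2 B2 Q :: "real mat"
  assumes A2: "A2 \<in> carrier_mat 4 4" and B2: "B2 \<in> carrier_mat 4 4" and Q: "Q \<in> carrier_mat 4 4"
    and QA: "transpose_mat Q * A2 * Q = KA eps e2 e3" and QB: "transpose_mat Q * B2 * Q = KB eps l e2 e3"
    and eps: "eps \<in> {-1,1}" and e2: "e2 \<in> {-1,1}" and e3: "e3 \<in> {-1,1}"
  shows "even (Id A2 B2 (l - 1)) \<longleftrightarrow> e2 * e3 = -1"
proof -
  define S where "S = (l - 1) \<cdot>\<^sub>m A2 - B2"
  have S: "S \<in> carrier_mat 4 4" unfolding S_def using A2 B2 by (simp add: minus_carrier_mat)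
  define D where "D = transpose_mat Q * S * Q"
  have D: "D \<in> carrier_mat 4 4" unfolding D_def using Q S by simp
  have cQ: "\<And>k. col Q k \<in> carrier_vec 4" using Q by (auto intro!: carrier_vecI)
  have Dent: "D $$ (i,j) = (l - 1) * KA eps e2 e3 $$ (i,j) - KB eps l e2 e3 $$ (i,j)" if ij: "i < 4" "j < 4" for i j
  proof -
    have "D $$ (i,j) = bf S (col Q i) (col Q j)" unfolding D_def by (rule qmq_ent[OF Q S ij])
    also have "\<dots> = (l - 1) * bf A2 (col Q i) (col Q j) - bf B2 (col Q i) (col Q j)"
      unfolding S_def by (rule bf_lin_mat(2)[OF A2 B2 cQ cQ])
    also have "\<dots> = (l - 1) * KA eps e2 e3 $$ (i,j) - KB eps l e2 e3 $$ (i,j)"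
      unfolding QA[symmetric] QB[symmetric] qmq_ent[OF Q A2 ij] qmq_ent[OF Q B2 ij] ..
    finally show ?thesis .
  qed
  have "det D = - (eps * eps) * (e2 * e3)"
    apply (subst det4[OF D])
    apply (simp only: Dent zero_less_numeral one_less_numeral_iff numeral_less_iff semiring_norm)
    apply (simp add: KA_ent KB_ent algebra_simps)
    done
  hence dD: "det D = - (e2 * e3)" using eps by auto
  have "det D = det Q * det S * det Q" unfolding D_def using Q S
    by (simp add: det_mult[of _ 4] det_transpose)
  hence dS: "det S * (det Q * det Q) = - (e2 * e3)" using dD by (simp add: algebra_simps)
  have e23: "e2 * e3 \<in> {-1,1}" using e2 e3 by auto
  have qq: "det Q * det Q \<ge> 0" by simp
  have qpos: "det Q * det Q > 0"
  proof -
    have "det Q * det Q \<noteq> 0" using dS e23 by auto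
    thus ?thesis using qq by linarith
  qed
  have "det S > 0 \<longleftrightarrow> det S * (det Q * det Q) > 0" using qpos by (simp add: zero_less_mult_iff)
  hence sgn: "det S > 0 \<longleftrightarrow> e2 * e3 = -1" unfolding dS using e23 by auto
  have cm: "degree (char_poly S) = 4 \<and> coeff (char_poly S) 4 = 1" by (rule degree_monic_char_poly[OF S])
  have cp0: "char_poly S \<noteq> 0" using cm by auto
  have lc: "lead_coeff (char_poly S) > 0" using cm by simp
  have cm0: "char_matrix S 0 = S" unfolding char_matrix_def using S by (intro eq_matI, auto)
  have p0: "poly (char_poly S) 0 = det S" unfolding char_poly_matrix[OF S] cm0 det_neg4[OF S] ..
  have dS0: "det S \<noteq> 0" using dS e23 by auto
  have "even (Id A2 B2 (l - 1)) \<longleftrightarrow> poly (char_poly S) 0 > 0"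
    unfolding Id_def num_pos_eig_def S_def[symmetric] npos_def[symmetric]
    by (rule npos_parity[OF cp0 _ lc], simp add: p0 dS0)
  thus ?thesis unfolding p0 sgn .
qed


lemma cmat_carrier[simp]: "cmat A \<in> carrier_mat n m \<longleftrightarrow> A \<in> carrier_mat n m" unfolding cmat_def by simp
lemma cmat_dims[simp]: "dim_row (cmat A) = dim_row A" "dim_col (cmat A) = dim_col A" unfolding cmat_def by simp_all
lemma cmat_ent[simp]: "i < dim_row A \<Longrightarrow> j < dim_col A \<Longrightarrow> cmat A $$ (i,j) = complex_of_real (A $$ (i,j))"
  unfolding cmat_def by simp

lemma cmat_mult: fixes A B :: "real mat" assumes A: "A \<in> carrier_mat 4 4" and B: "B \<in> carrier_mat 4 4"
  shows "cmat (A * B) = cmat A * cmat B"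
proof (rule eq_matI)
  fix i j assume "i < dim_row (cmat A * cmat B)" "j < dim_col (cmat A * cmat B)"
  hence ij: "i < 4" "j < 4" using A B by auto
  have cA: "cmat A \<in> carrier_mat 4 4" and cB: "cmat B \<in> carrier_mat 4 4" using A B by auto
  show "cmat (A * B) $$ (i, j) = (cmat A * cmat B) $$ (i, j)"
    unfolding mult4[OF cA cB ij] using A B ij by (simp add: mult4[OF A B ij])
qed (use A B in auto)

lemma cmat_transpose: "cmat (transpose_mat A) = transpose_mat (cmat A)"
  unfolding cmat_def by (rule map_mat_transpose[symmetric])

lemma cmat_one: "cmat (1\<^sub>m n) = 1\<^sub>m n" unfolding cmat_def by (intro eq_matI, auto)

lemma cmat_lin: fixes A B :: "real mat" assumes A: "A \<in> carrier_mat 4 4" and B: "B \<in> carrier_mat 4 4"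
  and X: "X \<in> carrier_vec 4"
  shows "cmat (a \<cdot>\<^sub>m A + b \<cdot>\<^sub>m B) *\<^sub>v X = complex_of_real a \<cdot>\<^sub>v (cmat A *\<^sub>v X) + complex_of_real b \<cdot>\<^sub>v (cmat B *\<^sub>v X)"
proof -
  have M: "cmat (a \<cdot>\<^sub>m A + b \<cdot>\<^sub>m B) \<in> carrier_mat 4 4" using A B by simp
  have cA: "cmat A \<in> carrier_mat 4 4" and cB: "cmat B \<in> carrier_mat 4 4" using A B by auto
  show ?thesis using A B X
    by (intro eq_vecI) (simp_all add: mulv4[OF M X] mulv4[OF cA X] mulv4[OF cB X] algebra_simps del: index_mult_mat_vec)
qed

lemma quad_lin: fixes A B :: "real mat" assumes A: "A \<in> carrier_mat 4 4" and B: "B \<in> carrier_mat 4 4"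
  and X: "X \<in> carrier_vec 4"
  shows "quad_form (a \<cdot>\<^sub>m A + b \<cdot>\<^sub>m B) X = complex_of_real a * quad_form A X + complex_of_real b * quad_form B X"
  unfolding quad_form_def cmat_lin[OF A B X] using A B X
  by (simp add: scalar_prod_add_distrib[of _ 4])

lemma qsic_comb: fixes A B :: "real mat" assumes A: "A \<in> carrier_mat 4 4" and B: "B \<in> carrier_mat 4 4"
  and det: "al * de - be * ga \<noteq> 0"
  shows "qsic (al \<cdot>\<^sub>m A + be \<cdot>\<^sub>m B) (ga \<cdot>\<^sub>m A + de \<cdot>\<^sub>m B) = qsic A B"
proof -
  have "quad_form (al \<cdot>\<^sub>m A + be \<cdot>\<^sub>m B) X = 0 \<and> quad_form (ga \<cdot>\<^sub>m A + de \<cdot>\<^sub>m B) X = 0 \<longleftrightarrow>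
        quad_form A X = 0 \<and> quad_form B X = 0" if X: "X \<in> carrier_vec 4" for X
  proof -
    let ?a = "quad_form A X" and ?b = "quad_form B X"
    have dc: "complex_of_real al * complex_of_real de - complex_of_real be * complex_of_real ga \<noteq> 0"
      using det by (metis of_real_mult of_real_diff of_real_eq_0_iff)
    {
      assume h: "complex_of_real al * ?a + complex_of_real be * ?b = 0" "complex_of_real ga * ?a + complex_of_real de * ?b = 0"
      let ?al = "complex_of_real al" and ?be = "complex_of_real be" and ?ga = "complex_of_real ga" and ?de = "complex_of_real de"
      have "(?al * ?de - ?be * ?ga) * ?a = ?de * (?al * ?a + ?be * ?b) - ?be * (?ga * ?a + ?de * ?b)"
        by (simp add: algebra_simps)
      hence "(?al * ?de - ?be * ?ga) * ?a = 0" unfolding h by simp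
      hence a0: "?a = 0" using dc by simp
      have "(?al * ?de - ?be * ?ga) * ?b = ?al * (?ga * ?a + ?de * ?b) - ?ga * (?al * ?a + ?be * ?b)"
        by (simp add: algebra_simps)
      hence "(?al * ?de - ?be * ?ga) * ?b = 0" unfolding h by simp
      hence "?b = 0" using dc by simp
      note a0 this
    }
    thus ?thesis unfolding quad_lin[OF A B X] by auto
  qed
  thus ?thesis unfolding qsic_def by auto
qed

lemma tangent_from_kernel: fixes A B :: "real mat" assumes A: "A \<in> carrier_mat 4 4" and B: "B \<in> carrier_mat 4 4"
  and nz: "(ga, de) \<noteq> (0, 0)"
  and ker: "\<forall>X\<in>L. X \<in> carrier_vec 4 \<and> cmat (ga \<cdot>\<^sub>m A + de \<cdot>\<^sub>m B) *\<^sub>v X = 0\<^sub>v 4"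
  shows "tangent_along A B L"
  unfolding tangent_along_def
proof
  fix X assume "X \<in> L"
  with ker have X: "X \<in> carrier_vec 4" and k: "cmat (ga \<cdot>\<^sub>m A + de \<cdot>\<^sub>m B) *\<^sub>v X = 0\<^sub>v 4" by auto
  show "\<exists>a b. (a, b) \<noteq> (0, 0) \<and> a \<cdot>\<^sub>v (cmat A *\<^sub>v X) + b \<cdot>\<^sub>v (cmat B *\<^sub>v X) = 0\<^sub>v 4"
    using nz k unfolding cmat_lin[OF A B X]
    by (intro exI[of _ "complex_of_real ga"] exI[of _ "complex_of_real de"], auto)
qed

lemma quad_coord: fixes M R :: "real mat" assumes M: "M \<in> carrier_mat 4 4" and R: "R \<in> carrier_mat 4 4"
  and Y: "Y \<in> carrier_vec 4"
  shows "quad_form M (cmat R *\<^sub>v Y) = Y \<bullet> (cmat (transpose_mat R * M * R) *\<^sub>v Y)"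
proof -
  have cR: "cmat R \<in> carrier_mat 4 4" and cM: "cmat M \<in> carrier_mat 4 4" and cRT: "transpose_mat (cmat R) \<in> carrier_mat 4 4" using R M by auto
  have e: "cmat (transpose_mat R * M * R) = transpose_mat (cmat R) * cmat M * cmat R"
    using R M by (simp add: cmat_mult cmat_transpose)
  define W where "W = cmat M *\<^sub>v (cmat R *\<^sub>v Y)"
  have W: "W \<in> carrier_vec 4" unfolding W_def using cM cR Y by simp
  have "(transpose_mat (cmat R) * cmat M * cmat R) *\<^sub>v Y = transpose_mat (cmat R) *\<^sub>v W"
    unfolding W_def using assoc_mult_mat_vec[OF cRT mult_carrier_mat[OF cM cR] Y] assoc_mult_mat_vec[OF cM cR Y]
      assoc_mult_mat[OF cRT cM cR] by simp
  hence "Y \<bullet> (cmat (transpose_mat R * M * R) *\<^sub>v Y) = Y \<bullet> (transpose_mat (cmat R) *\<^sub>v W)" unfolding e by simp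
  also have "\<dots> = (transpose_mat (cmat R) *\<^sub>v W) \<bullet> Y" using Y W cRT by (simp add: comm_scalar_prod[of _ 4])
  also have "\<dots> = W \<bullet> (cmat R *\<^sub>v Y)" by (rule transpose_vec_mult_scalar[OF cR Y W])
  also have "\<dots> = (cmat R *\<^sub>v Y) \<bullet> W" using Y W cR by (simp add: comm_scalar_prod[of _ 4])
  finally show ?thesis unfolding quad_form_def W_def by simp
qed


definition KE :: "real \<Rightarrow> real mat" where
  "KE eps = mat_of_rows_list 4 [[0, 0, 0, 0], [0, eps, 0, 0], [0, 0, 0, 0], [0, 0, 0, 0]]"
lemma KE_carrier[simp]: "KE eps \<in> carrier_mat 4 4" unfolding KE_def carrier_mat_def by (simp add: mat_of_rows_list_def)
lemma KE_dims[simp]: "dim_row (KE eps) = 4" "dim_col (KE eps) = 4" by (simp_all add: KE_def mat_of_rows_list_def)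
lemma KE_ent0: "KE eps $$ (0,0) = 0" "KE eps $$ (0,1) = 0" "KE eps $$ (0,2) = 0" "KE eps $$ (0,3) = 0"
  "KE eps $$ (1,0) = 0" "KE eps $$ (1,1) = eps" "KE eps $$ (1,2) = 0" "KE eps $$ (1,3) = 0"
  "KE eps $$ (2,0) = 0" "KE eps $$ (2,1) = 0" "KE eps $$ (2,2) = 0" "KE eps $$ (2,3) = 0"
  "KE eps $$ (3,0) = 0" "KE eps $$ (3,1) = 0" "KE eps $$ (3,2) = 0" "KE eps $$ (3,3) = 0"
  by (simp_all add: KE_def mat_of_rows_list_def)
lemmas KE_ent = KE_ent0 KE_ent0[unfolded One_nat_def]

lemma qKA: assumes Y: "(Y :: complex vec) \<in> carrier_vec 4"
  shows "Y \<bullet> (cmat (KA eps e2 e3) *\<^sub>v Y) = 2 * complex_of_real eps * Y$0 * Y$1 + complex_of_real e2 * Y$2^2 + complex_of_real e3 * Y$3^2"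
proof -
  have K: "cmat (KA eps e2 e3) \<in> carrier_mat 4 4" by simp
  show ?thesis unfolding sprod4[OF Y mult_mat_vec_carrier[OF K Y]]
    by (simp add: mulv4[OF K Y] KA_ent power2_eq_square algebra_simps del: index_mult_mat_vec)
qed

lemma qKE: assumes Y: "(Y :: complex vec) \<in> carrier_vec 4"
  shows "Y \<bullet> (cmat (KE eps) *\<^sub>v Y) = complex_of_real eps * Y$1^2"
proof -
  have K: "cmat (KE eps) \<in> carrier_mat 4 4" by simp
  show ?thesis unfolding sprod4[OF Y mult_mat_vec_carrier[OF K Y]]
    by (simp add: mulv4[OF K Y] KE_ent power2_eq_square algebra_simps del: index_mult_mat_vec)
qed

lemma KE_vec: assumes Y: "(Y :: complex vec) \<in> carrier_vec 4" and Y1: "Y$1 = 0"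
  shows "cmat (KE eps) *\<^sub>v Y = 0\<^sub>v 4"
proof -
  have K: "cmat (KE eps) \<in> carrier_mat 4 4" by simp
  show ?thesis using Y Y1
    by (intro eq_vecI) (auto simp: mulv4[OF K Y] KE_ent less4 simp del: index_mult_mat_vec)
qed

definition Lz :: "real mat \<Rightarrow> complex \<Rightarrow> complex vec set" where
  "Lz R z = {a \<cdot>\<^sub>v col (cmat R) 0 + b \<cdot>\<^sub>v (col (cmat R) 2 + z \<cdot>\<^sub>v col (cmat R) 3) | a b. True}"

context
  fixes R Ri :: "real mat"
  assumes R: "R \<in> carrier_mat 4 4" and Ri: "Ri \<in> carrier_mat 4 4" and RRi: "R * Ri = 1\<^sub>m 4" and RiR: "Ri * R = 1\<^sub>m 4"
begin

lemma cR: "cmat R \<in> carrier_mat 4 4" using R by simp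
lemma cRi: "cmat Ri \<in> carrier_mat 4 4" using Ri by simp
lemma cRRi: "cmat R * cmat Ri = 1\<^sub>m 4" using cmat_mult[OF R Ri] RRi cmat_one by metis
lemma cRiR: "cmat Ri * cmat R = 1\<^sub>m 4" using cmat_mult[OF Ri R] RiR cmat_one by metis
lemma colc: "col (cmat R) k \<in> carrier_vec 4" using R by (auto intro!: carrier_vecI)

lemma Ric_col: "k < 4 \<Longrightarrow> cmat Ri *\<^sub>v col (cmat R) k = unit_vec 4 k"
  using col_mult2[OF cRi cR, of k] cRiR by simp

lemma Ric_Lz: "cmat Ri *\<^sub>v (a \<cdot>\<^sub>v col (cmat R) 0 + b \<cdot>\<^sub>v (col (cmat R) 2 + z \<cdot>\<^sub>v col (cmat R) 3))
   = a \<cdot>\<^sub>v unit_vec 4 0 + b \<cdot>\<^sub>v (unit_vec 4 2 + z \<cdot>\<^sub>v unit_vec 4 3)"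
  using colc cRi by (simp add: mult_add_distrib_mat_vec[OF cRi] mult_mat_vec[OF cRi] Ric_col)

lemma X_decomp: "X \<in> carrier_vec 4 \<Longrightarrow> cmat R *\<^sub>v (cmat Ri *\<^sub>v X) = X"
  using assoc_mult_mat_vec[OF cR cRi, of X] cRRi by simp

lemma Lz_carrier: "Lz R z \<subseteq> carrier_vec 4" unfolding Lz_def using colc by auto

lemma Lz_iff: assumes X: "X \<in> carrier_vec 4"
  shows "X \<in> Lz R z \<longleftrightarrow> (cmat Ri *\<^sub>v X)$1 = 0 \<and> (cmat Ri *\<^sub>v X)$3 = z * (cmat Ri *\<^sub>v X)$2"
proof
  assume "X \<in> Lz R z"
  then obtain a b where Xe: "X = a \<cdot>\<^sub>v col (cmat R) 0 + b \<cdot>\<^sub>v (col (cmat R) 2 + z \<cdot>\<^sub>v col (cmat R) 3)"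
    unfolding Lz_def by auto
  show "(cmat Ri *\<^sub>v X)$1 = 0 \<and> (cmat Ri *\<^sub>v X)$3 = z * (cmat Ri *\<^sub>v X)$2" unfolding Xe Ric_Lz by simp
next
  assume h: "(cmat Ri *\<^sub>v X)$1 = 0 \<and> (cmat Ri *\<^sub>v X)$3 = z * (cmat Ri *\<^sub>v X)$2"
  define Y where "Y = cmat Ri *\<^sub>v X"
  have Y: "Y \<in> carrier_vec 4" unfolding Y_def using cRi X by simp
  have XY: "X = cmat R *\<^sub>v Y" unfolding Y_def using X_decomp[OF X] by simp
  have "X = Y$0 \<cdot>\<^sub>v col (cmat R) 0 + Y$2 \<cdot>\<^sub>v (col (cmat R) 2 + z \<cdot>\<^sub>v col (cmat R) 3)"
    unfolding XY using h[folded Y_def] colc cR Y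
    by (intro eq_vecI) (simp_all add: mulv4[OF cR Y] algebra_simps del: index_mult_mat_vec cmat_ent)
  thus "X \<in> Lz R z" unfolding Lz_def by blast
qed

lemma c0_in: "col (cmat R) 0 \<in> Lz R z"
proof -
  have "col (cmat R) 0 = 1 \<cdot>\<^sub>v col (cmat R) 0 + 0 \<cdot>\<^sub>v (col (cmat R) 2 + z \<cdot>\<^sub>v col (cmat R) 3)"
    using colc by (intro eq_vecI, auto)
  thus ?thesis unfolding Lz_def by blast
qed

lemma c0_nz: "col (cmat R) 0 \<noteq> 0\<^sub>v 4"
proof
  assume "col (cmat R) 0 = 0\<^sub>v 4"
  hence "cmat Ri *\<^sub>v col (cmat R) 0 = 0\<^sub>v 4" using mat_vec_zero[OF cRi] by simp
  hence "unit_vec 4 0 = (0\<^sub>v 4 :: complex vec)" using Ric_col[of 0] by simp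
  thus False using arg_cong[of _ _ "\<lambda>v. v $ 0"] by (metis index_unit_vec(2) index_zero_vec(1) zero_less_numeral zero_neq_one)
qed

lemma q_in: "col (cmat R) 2 + z \<cdot>\<^sub>v col (cmat R) 3 \<in> Lz R z"
proof -
  have "col (cmat R) 2 + z \<cdot>\<^sub>v col (cmat R) 3 = 0 \<cdot>\<^sub>v col (cmat R) 0 + 1 \<cdot>\<^sub>v (col (cmat R) 2 + z \<cdot>\<^sub>v col (cmat R) 3)"
    using colc by (intro eq_vecI, auto)
  thus ?thesis unfolding Lz_def by blast
qed

lemma Lz_ne: assumes "z \<noteq> z'" shows "Lz R z \<noteq> Lz R z'"
proof
  assume eq: "Lz R z = Lz R z'"
  let ?q = "col (cmat R) 2 + z \<cdot>\<^sub>v col (cmat R) 3"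
  have qc: "?q \<in> carrier_vec 4" using colc by simp
  have "?q \<in> Lz R z" by (rule q_in)
  hence "?q \<in> Lz R z'" unfolding eq .
  hence "(cmat Ri *\<^sub>v ?q)$3 = z' * (cmat Ri *\<^sub>v ?q)$2" using Lz_iff[OF qc] by simp
  moreover have "cmat Ri *\<^sub>v ?q = unit_vec 4 2 + z \<cdot>\<^sub>v unit_vec 4 3"
    using colc by (simp add: mult_add_distrib_mat_vec[OF cRi] mult_mat_vec[OF cRi] Ric_col)
  ultimately show False using assms by simp
qed

lemma Lz_line: "is_line (Lz R z)"
  unfolding is_line_def Lz_def
proof (intro exI conjI allI impI)
  show "col (cmat R) 0 \<in> carrier_vec 4" "col (cmat R) 2 + z \<cdot>\<^sub>v col (cmat R) 3 \<in> carrier_vec 4" using colc by auto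
  fix a b assume h: "a \<cdot>\<^sub>v col (cmat R) 0 + b \<cdot>\<^sub>v (col (cmat R) 2 + z \<cdot>\<^sub>v col (cmat R) 3) = 0\<^sub>v 4"
  have "a \<cdot>\<^sub>v unit_vec 4 0 + b \<cdot>\<^sub>v (unit_vec 4 2 + z \<cdot>\<^sub>v unit_vec 4 3) = (0\<^sub>v 4 :: complex vec)"
    using arg_cong[OF h, of "\<lambda>v. cmat Ri *\<^sub>v v"] unfolding Ric_Lz mat_vec_zero[OF cRi] .
  from arg_cong[OF this, of "\<lambda>v. v $ 0"] arg_cong[OF this, of "\<lambda>v. v $ 2"]
  show "a = 0" "b = 0" by auto
qed rule

lemma conj_Lz: "conj_set (Lz R z) = Lz R (cnj z)"
proof -
  have cc: "map_vec cnj (col (cmat R) k) = col (cmat R) k" if "k < 4" for k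
    using R that by (intro eq_vecI, auto)
  have m: "map_vec cnj (a \<cdot>\<^sub>v col (cmat R) 0 + b \<cdot>\<^sub>v (col (cmat R) 2 + w \<cdot>\<^sub>v col (cmat R) 3))
     = cnj a \<cdot>\<^sub>v col (cmat R) 0 + cnj b \<cdot>\<^sub>v (col (cmat R) 2 + cnj w \<cdot>\<^sub>v col (cmat R) 3)" for a b w
    using colc R cc[of 0] cc[of 2] cc[of 3] by (intro eq_vecI, auto)
  show ?thesis unfolding conj_set_def Lz_def
  proof (intro equalityI subsetI)
    fix X assume "X \<in> map_vec cnj ` {a \<cdot>\<^sub>v col (cmat R) 0 + b \<cdot>\<^sub>v (col (cmat R) 2 + z \<cdot>\<^sub>v col (cmat R) 3) |a b. True}"
    then obtain a b where "X = map_vec cnj (a \<cdot>\<^sub>v col (cmat R) 0 + b \<cdot>\<^sub>v (col (cmat R) 2 + z \<cdot>\<^sub>v col (cmat R) 3))" by auto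
    thus "X \<in> {a \<cdot>\<^sub>v col (cmat R) 0 + b \<cdot>\<^sub>v (col (cmat R) 2 + cnj z \<cdot>\<^sub>v col (cmat R) 3) |a b. True}" unfolding m by blast
  next
    fix X assume "X \<in> {a \<cdot>\<^sub>v col (cmat R) 0 + b \<cdot>\<^sub>v (col (cmat R) 2 + cnj z \<cdot>\<^sub>v col (cmat R) 3) |a b. True}"
    then obtain a b where "X = a \<cdot>\<^sub>v col (cmat R) 0 + b \<cdot>\<^sub>v (col (cmat R) 2 + cnj z \<cdot>\<^sub>v col (cmat R) 3)" by auto
    hence "X = map_vec cnj (cnj a \<cdot>\<^sub>v col (cmat R) 0 + cnj b \<cdot>\<^sub>v (col (cmat R) 2 + z \<cdot>\<^sub>v col (cmat R) 3))" unfolding m by simp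
    thus "X \<in> map_vec cnj ` {a \<cdot>\<^sub>v col (cmat R) 0 + b \<cdot>\<^sub>v (col (cmat R) 2 + z \<cdot>\<^sub>v col (cmat R) 3) |a b. True}" by blast
  qed
qed

lemma congr_back: fixes M K :: "real mat" assumes M: "M \<in> carrier_mat 4 4" and RM: "transpose_mat R * M * R = K"
  shows "M = transpose_mat Ri * K * Ri"
proof -
  have RT: "transpose_mat R \<in> carrier_mat 4 4" and RiT: "transpose_mat Ri \<in> carrier_mat 4 4" using R Ri by auto
  have TT: "transpose_mat Ri * transpose_mat R = 1\<^sub>m 4" using transpose_mult[OF R Ri] RRi by simp
  have "transpose_mat Ri * K * Ri = transpose_mat Ri * (transpose_mat R * M * R) * Ri" unfolding RM ..
  also have "\<dots> = (transpose_mat Ri * transpose_mat R) * M * (R * Ri)"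
    using RT RiT M R Ri by (simp add: assoc_mult_mat[of _ 4 4 _ 4 _ 4])
  also have "\<dots> = M" unfolding TT RRi using M by simp
  finally show ?thesis by simp
qed

lemma tangent_canon: fixes B1 :: "real mat" assumes B1: "B1 \<in> carrier_mat 4 4" and RB: "transpose_mat R * B1 * R = KE eps"
  and X: "X \<in> Lz R z" shows "cmat B1 *\<^sub>v X = 0\<^sub>v 4"
proof -
  have Xc: "X \<in> carrier_vec 4" using X Lz_carrier by auto
  have Bq: "B1 = transpose_mat Ri * KE eps * Ri" by (rule congr_back[OF B1 RB])
  have cRiT: "transpose_mat (cmat Ri) \<in> carrier_mat 4 4" and cK: "cmat (KE eps) \<in> carrier_mat 4 4" using Ri by auto
  have e: "cmat B1 = transpose_mat (cmat Ri) * cmat (KE eps) * cmat Ri"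
    unfolding Bq using Ri by (simp add: cmat_mult cmat_transpose)
  define Y where "Y = cmat Ri *\<^sub>v X"
  have Y: "Y \<in> carrier_vec 4" unfolding Y_def using cRi Xc by simp
  have Y1: "Y $ 1 = 0" unfolding Y_def using Lz_iff[OF Xc] X by simp
  have "cmat B1 *\<^sub>v X = transpose_mat (cmat Ri) *\<^sub>v (cmat (KE eps) *\<^sub>v Y)" unfolding e Y_def
    using assoc_mult_mat_vec[OF mult_carrier_mat[OF cRiT cK] cRi Xc] assoc_mult_mat_vec[OF cRiT cK mult_mat_vec_carrier[OF cRi Xc]]
    by simp
  also have "\<dots> = 0\<^sub>v 4" unfolding KE_vec[OF Y Y1] by (rule mat_vec_zero[OF cRiT])
  finally show ?thesis .
qed

lemma qsic_canon: fixes A1 B1 :: "real mat"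
  assumes A1: "A1 \<in> carrier_mat 4 4" and B1: "B1 \<in> carrier_mat 4 4"
  and RA: "transpose_mat R * A1 * R = KA eps e2 e3" and RB: "transpose_mat R * B1 * R = KE eps"
  and eps: "eps \<noteq> 0" and e3: "e3 \<noteq> 0" and zz: "complex_of_real e2 + complex_of_real e3 * z^2 = 0"
  shows "qsic A1 B1 = (Lz R z \<union> Lz R (-z)) - {0\<^sub>v 4}"
proof -
  have key: "quad_form A1 X = 0 \<and> quad_form B1 X = 0 \<longleftrightarrow> X \<in> Lz R z \<or> X \<in> Lz R (-z)" if X: "X \<in> carrier_vec 4" for X
  proof -
    define Y where "Y = cmat Ri *\<^sub>v X"
    have Y: "Y \<in> carrier_vec 4" unfolding Y_def using cRi X by simp
    have XY: "X = cmat R *\<^sub>v Y" unfolding Y_def using X_decomp[OF X] by simp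
    have qA: "quad_form A1 X = 2 * complex_of_real eps * Y$0 * Y$1 + complex_of_real e2 * Y$2^2 + complex_of_real e3 * Y$3^2"
      unfolding XY quad_coord[OF A1 R Y] RA qKA[OF Y] ..
    have qB: "quad_form B1 X = complex_of_real eps * Y$1^2"
      unfolding XY quad_coord[OF B1 R Y] RB qKE[OF Y] ..
    have e2: "complex_of_real e2 = - complex_of_real e3 * z^2" using zz by (simp add: algebra_simps add_eq_0_iff)
    have fac: "complex_of_real e2 * Y$2^2 + complex_of_real e3 * Y$3^2 = complex_of_real e3 * ((Y$3 - z * Y$2) * (Y$3 + z * Y$2))"
      unfolding e2 by (simp add: algebra_simps power2_eq_square)
    have "quad_form A1 X = 0 \<and> quad_form B1 X = 0 \<longleftrightarrow> Y$1 = 0 \<and> (Y$3 = z * Y$2 \<or> Y$3 = (-z) * Y$2)"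
      unfolding qA qB using eps e3 fac by (auto simp: add_eq_0_iff)
    thus ?thesis unfolding Lz_iff[OF X] Y_def[symmetric] by auto
  qed
  show ?thesis unfolding qsic_def using key Lz_carrier by blast
qed

end


lemma canon_final:
  fixes A B R :: "real mat"
  assumes A: "A \<in> carrier_mat 4 4" and B: "B \<in> carrier_mat 4 4" and R: "R \<in> carrier_mat 4 4"
    and invR: "invertible_mat R" and det: "al * de - be * ga \<noteq> 0"
    and RA: "transpose_mat R * (al \<cdot>\<^sub>m A + be \<cdot>\<^sub>m B) * R = KA eps e2 e3"
    and RB: "transpose_mat R * (ga \<cdot>\<^sub>m A + de \<cdot>\<^sub>m B) * R = KB eps l e2 e3"
    and eps: "eps \<in> {-1,1}" and e2: "e2 \<in> {-1,1}" and e3: "e3 \<in> {-1,1}"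
  shows "(e2 * e3 = -1 \<longrightarrow> qsic_real_intersecting_lines_double A B) \<and> (e2 * e3 = 1 \<longrightarrow> qsic_conj_lines_double A B)"
proof -
  obtain Ri where Ri: "Ri \<in> carrier_mat 4 4" "R * Ri = 1\<^sub>m 4" "Ri * R = 1\<^sub>m 4" using invertible_inv[OF R invR] by auto
  define A1 where "A1 = al \<cdot>\<^sub>m A + be \<cdot>\<^sub>m B"
  define ga' where "ga' = ga - l * al"
  define de' where "de' = de - l * be"
  define B1 where "B1 = ga' \<cdot>\<^sub>m A + de' \<cdot>\<^sub>m B"
  have A1: "A1 \<in> carrier_mat 4 4" and B1: "B1 \<in> carrier_mat 4 4" unfolding A1_def B1_def using A B by auto
  have det': "al * de' - be * ga' \<noteq> 0" unfolding ga'_def de'_def using det by (simp add: algebra_simps)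
  have nz: "(ga', de') \<noteq> (0, 0)" using det' by auto
  have cR: "\<And>k. col R k \<in> carrier_vec 4" using R by (auto intro!: carrier_vecI)
  have GA: "ga \<cdot>\<^sub>m A + de \<cdot>\<^sub>m B \<in> carrier_mat 4 4" using A B by auto
  have RB1: "transpose_mat R * B1 * R = KE eps"
  proof (rule eq_matI)
    fix i j assume "i < dim_row (KE eps)" "j < dim_col (KE eps)"
    hence ij: "i < 4" "j < 4" by auto
    have "(transpose_mat R * B1 * R) $$ (i,j) = KB eps l e2 e3 $$ (i,j) - l * KA eps e2 e3 $$ (i,j)"
      unfolding qmq_ent[OF R B1 ij] RA[symmetric] RB[symmetric] qmq_ent[OF R A1[unfolded A1_def] ij] qmq_ent[OF R GA ij]
      unfolding B1_def bf_lin_mat(1)[OF A B cR cR] ga'_def de'_def by (simp add: algebra_simps)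
    also have "\<dots> = KE eps $$ (i,j)" using ij by (auto simp: less4 KA_ent KB_ent KE_ent)
    finally show "(transpose_mat R * B1 * R) $$ (i,j) = KE eps $$ (i,j)" .
  qed (use R in auto)
  have RA1: "transpose_mat R * A1 * R = KA eps e2 e3" unfolding A1_def by (rule RA)
  have Q: "qsic A B = qsic A1 B1" unfolding A1_def B1_def by (rule qsic_comb[OF A B det', symmetric])
  have eps0: "eps \<noteq> 0" and e30: "e3 \<noteq> 0" using eps e3 by auto
  have tang: "tangent_along A B (Lz R z)" for z
  proof (rule tangent_from_kernel[OF A B nz])
    show "\<forall>X\<in>Lz R z. X \<in> carrier_vec 4 \<and> cmat (ga' \<cdot>\<^sub>m A + de' \<cdot>\<^sub>m B) *\<^sub>v X = 0\<^sub>v 4"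
      using Lz_carrier[OF R Ri] tangent_canon[OF R Ri B1 RB1] unfolding B1_def by auto
  qed
  have two: "qsic_two_double_lines A B (Lz R z) (Lz R (-z))"
    if zz: "complex_of_real e2 + complex_of_real e3 * z^2 = 0" and z0: "z \<noteq> 0" for z
    unfolding qsic_two_double_lines_def
  proof (intro conjI)
    show "is_line (Lz R z)" "is_line (Lz R (-z))" by (rule Lz_line[OF R Ri])+
    show "Lz R z \<noteq> Lz R (-z)" using z0 by (intro Lz_ne[OF R Ri], auto)
    show "qsic A B = Lz R z \<union> Lz R (-z) - {0\<^sub>v 4}" unfolding Q by (rule qsic_canon[OF R Ri A1 B1 RA1 RB1 eps0 e30 zz])
    show "tangent_along A B (Lz R z)" "tangent_along A B (Lz R (-z))" by (rule tang)+
  qed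
  show ?thesis
  proof (intro conjI impI)
    assume "e2 * e3 = -1"
    hence "e3 = - e2" using e2 e3 by auto
    hence zz: "complex_of_real e2 + complex_of_real e3 * 1^2 = 0" by simp
    have tw: "qsic_two_double_lines A B (Lz R 1) (Lz R (-1))" using two[OF zz] by simp
    have r1: "real_line (Lz R 1)" unfolding real_line_def using Lz_line[OF R Ri] conj_Lz[OF R Ri, of 1] by simp
    have r2: "real_line (Lz R (-1))" unfolding real_line_def using Lz_line[OF R Ri] conj_Lz[OF R Ri, of "-1"] by simp
    have c0: "col (cmat R) 0 \<in> Lz R 1 \<inter> Lz R (-1)" using c0_in[OF R Ri] by auto
    show "qsic_real_intersecting_lines_double A B" unfolding qsic_real_intersecting_lines_double_def
      using tw r1 r2 c0 c0_nz[OF R Ri] by blast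
  next
    assume "e2 * e3 = 1"
    hence "e3 = e2" using e2 e3 by auto
    hence zz: "complex_of_real e2 + complex_of_real e3 * \<i>^2 = 0" by simp
    have tw: "qsic_two_double_lines A B (Lz R \<i>) (Lz R (-\<i>))" using two[OF zz] by simp
    show "qsic_conj_lines_double A B" unfolding qsic_conj_lines_double_def
      using tw conj_Lz[OF R Ri, of "\<i>"] by (intro exI[of _ "Lz R \<i>"], simp)
  qed
qed


lemma from_equiv:
  fixes A B :: "real mat"
  assumes sA: "sym4 A" and sB: "sym4 B" and IE: "index_seq_equiv_211 A B s0 (-1) s1"
  shows "(even s0 \<longrightarrow> qsic_real_intersecting_lines_double A B) \<and> (odd s0 \<longrightarrow> qsic_conj_lines_double A B)"
proof -
  have A: "A \<in> carrier_mat 4 4" using sA by (rule sym4_carrier)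
  have B: "B \<in> carrier_mat 4 4" using sB by (rule sym4_carrier)
  from IE obtain A' B' where PE: "pencil_equiv A B A' B'" and IS: "index_seq_211 A' B' s0 (-1) s1"
    unfolding index_seq_equiv_211_def by auto
  from PE obtain P a b c d where P: "P \<in> carrier_mat 4 4" and invP: "invertible_mat P"
    and det: "a * d - b * c \<noteq> 0" and A'e: "A' = transpose_mat P * (a \<cdot>\<^sub>m A + b \<cdot>\<^sub>m B) * P"
    and B'e: "B' = transpose_mat P * (c \<cdot>\<^sub>m A + d \<cdot>\<^sub>m B) * P"
    unfolding pencil_equiv_def by blast
  from IS obtain lam0 where sA': "sym4 A'" and sB': "sym4 B'" and cs: "canon_sign_211 A' B' lam0 (-1)"
    and Id0: "\<forall>lam < lam0. Id A' B' lam = s0"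
    unfolding index_seq_211_def by blast
  from cs obtain Q e2 e3 where Q: "Q \<in> carrier_mat 4 4" and invQ: "invertible_mat Q"
    and e2: "e2 \<in> {-1,1}" and e3: "e3 \<in> {-1,1}"
    and QA: "transpose_mat Q * A' * Q = KA (-1) e2 e3" and QB: "transpose_mat Q * B' * Q = KB (-1) lam0 e2 e3"
    unfolding canon_unfold by blast
  have A': "A' \<in> carrier_mat 4 4" using sA' by (rule sym4_carrier)
  have B': "B' \<in> carrier_mat 4 4" using sB' by (rule sym4_carrier)
  have par: "even (Id A' B' (lam0 - 1)) \<longleftrightarrow> e2 * e3 = -1"
    by (rule parity_canon[OF A' B' Q QA QB _ e2 e3], simp)
  have Ids: "Id A' B' (lam0 - 1) = s0" using Id0 by simp
  define R where "R = P * Q"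
  have R: "R \<in> carrier_mat 4 4" unfolding R_def using P Q by simp
  have trans: "transpose_mat R * M * R = transpose_mat Q * (transpose_mat P * M * P) * Q" if M: "M \<in> carrier_mat 4 4" for M
  proof -
    have PT: "transpose_mat P \<in> carrier_mat 4 4" and QT: "transpose_mat Q \<in> carrier_mat 4 4" using P Q by auto
    have "transpose_mat R = transpose_mat Q * transpose_mat P" unfolding R_def by (rule transpose_mult[OF P Q])
    thus ?thesis unfolding R_def using PT QT M P Q by (simp add: assoc_mult_mat[of _ 4 4 _ 4 _ 4])
  qed
  have M1: "a \<cdot>\<^sub>m A + b \<cdot>\<^sub>m B \<in> carrier_mat 4 4" and M2: "c \<cdot>\<^sub>m A + d \<cdot>\<^sub>m B \<in> carrier_mat 4 4" using A B by auto
  have RA: "transpose_mat R * (a \<cdot>\<^sub>m A + b \<cdot>\<^sub>m B) * R = KA (-1) e2 e3" unfolding trans[OF M1] A'e[symmetric] QA ..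
  have RB: "transpose_mat R * (c \<cdot>\<^sub>m A + d \<cdot>\<^sub>m B) * R = KB (-1) lam0 e2 e3" unfolding trans[OF M2] B'e[symmetric] QB ..
  have "det R \<noteq> 0" unfolding R_def det_mult[OF P Q] using invertible_det[OF P invP] invertible_det[OF Q invQ] by simp
  hence invR: "invertible_mat R" by (rule det_invertible[OF R])
  have fin: "(e2 * e3 = -1 \<longrightarrow> qsic_real_intersecting_lines_double A B) \<and> (e2 * e3 = 1 \<longrightarrow> qsic_conj_lines_double A B)"
    by (rule canon_final[OF A B R invR det RA RB _ e2 e3], simp)
  have e23: "e2 * e3 \<in> {-1, 1}" using e2 e3 by auto
  show ?thesis using fin par Ids e23 by auto
qed

theorem theorem21:
  fixes A B :: "real mat"
  assumes "sym4 A" and "sym4 B"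
    and "pencil_poly A B \<noteq> 0"
    and "\<exists>lam0. order lam0 (pencil_poly A B) = 4 \<and> segre_211 A B lam0"
  shows "(index_seq_equiv_211 A B 2 (-1) 2 \<or> index_seq_equiv_211 A B 1 (-1) 3)
    \<and> (index_seq_equiv_211 A B 2 (-1) 2 \<longrightarrow> qsic_real_intersecting_lines_double A B)
    \<and> (index_seq_equiv_211 A B 1 (-1) 3 \<longrightarrow> qsic_conj_lines_double A B)"
proof (intro conjI impI)
  note sA = assms(1) and sB = assms(2)
  from assms(4) obtain lam0 where sg: "segre_211 A B lam0" by auto
  from sg obtain M n_as where inv: "invertible_mat A" and M: "M \<in> carrier_mat 4 4" and AM: "A * M = B"
    and jnf: "jordan_nf M n_as" and ms: "mset (map fst (filter (\<lambda>p. snd p = lam0) n_as)) = {#2, 1, 1#}"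
    unfolding segre_211_def by blast
  from jordan_struct[OF M jnf ms] obtain k where k: "k < 3" and sim: "similar_mat M (Jm k lam0)" by auto
  from similar_rank1[OF M sim k] obtain p q where p: "p \<in> carrier_vec 4" and q: "q \<in> carrier_vec 4"
    and p0: "p \<noteq> 0\<^sub>v 4" and q0: "q \<noteq> 0\<^sub>v 4" and qp: "q \<bullet> p = 0"
    and Me: "\<forall>i<4. \<forall>j<4. M $$ (i,j) = (if i = j then lam0 else 0) + p$i * q$j" by blast
  from pencil_struct[OF sA sB inv AM M p q p0 q0 qp Me] obtain t where t0: "t \<noteq> 0"
    and pp: "p \<bullet> (A *\<^sub>v p) = 0"
    and Bent: "\<forall>i<4. \<forall>j<4. B $$ (i,j) = lam0 * A $$ (i,j) + t * ((A *\<^sub>v p)$i * (A *\<^sub>v p)$j)" by blast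
  have pp': "bf A p p = 0" unfolding bf_def by (rule pp)
  from exists_canon[OF sA sB inv p p0 t0 pp' Bent] obtain e where e: "e \<in> {-1,1}"
    and pe: "pencil_equiv A B (cA e) cB" by blast
  show "index_seq_equiv_211 A B 2 (-1) 2 \<or> index_seq_equiv_211 A B 1 (-1) 3"
  proof (cases "e = 1")
    case True
    hence "index_seq_equiv_211 A B 1 (-1) 3" unfolding index_seq_equiv_211_def using pe idx_c1 by blast
    thus ?thesis by simp
  next
    case False
    hence "e = -1" using e by auto
    hence "index_seq_equiv_211 A B 2 (-1) 2" unfolding index_seq_equiv_211_def using pe idx_c2 by blast
    thus ?thesis by simp
  qed
next
  assume "index_seq_equiv_211 A B 2 (-1) 2"
  from from_equiv[OF assms(1,2) this] show "qsic_real_intersecting_lines_double A B" by simp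
next
  assume "index_seq_equiv_211 A B 1 (-1) 3"
  from from_equiv[OF assms(1,2) this] show "qsic_conj_lines_double A B" by simp
qed


end
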